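(* Consider the hidden factor model described in the context and suppose Assumptions 1–3 hold. Then for every $j=1,\dots,p$: (i) $\Theta_{j,j}=1/\tau_j^2$ with $$\tau_j^2=(\bar a_j'\bar a_j+\sigma_j^2)-\bar a_j'\bar A_{-j}'\Sigma_{U,-j}^{-1}\bar A_{-j}\bar G_j^{-1}\bar a_j;$$ (ii) $\Theta_{j,-j}=-\alpha_j^{*\prime}/\tau_j^2$ with $\alpha_j^*=\Sigma_{U,-j}^{-1}\bar A_{-j}\bar G_j^{-1}\bar a_j$; (iii) consequently the $j$th row of $\Theta$ is $\big(1/\tau_j^2,\,-\alpha_j^{*\prime}/\tau_j^2\big)$ (with entry $j$ placed first), and stacking these rows over $j=1,\dots,p$ gives $\Theta$.
   Context: Data: $Y=FA+U$ with $Y\in\mathbb R^{n\times p}$ (rows $y_t'$, $t=1,\dots,n$), $F\in\mathbb R^{n\times K}$ (rows $f_t'$, hidden factors), $A\in\mathbb R^{K\times p}$ (loadings), $U\in\mathbb R^{n\times p}$ (rows $u_t'$). For each $j$ write (after reordering) $A=[a_j,A_{-j}']$ with $a_j\in\mathbb R^K$, $A_{-j}\in\mathbb R^{(p-1)\times K}$, so that $y_{jt}=f_t'a_j+u_{jt}$ and $Y_{-jt}=A_{-j}f_t+U_{-jt}\in\mathbb R^{p-1}$ (all outcomes except $j$). Let $\sigma_j^2=\mathrm{var}(u_{jt})$, $\Sigma_{U,-j}=\mathrm{var}(U_{-jt})$, $\Sigma_f=\mathrm{cov}(f_t)$, $\mu_j=Ey_{jt}$, $\mu_{-j}=EY_{-jt}$,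 $\Sigma=E(y_t-Ey_t)(y_t-Ey_t)'$, $\Theta=\Sigma^{-1}$; $\Theta_{j,j}$ is its $j$th diagonal entry and $\Theta_{j,-j}$ its $j$th row with entry $j$ removed. Define $\alpha_j^*=\arg\min_{\alpha\in\mathbb R^{p-1}}E[(y_{jt}-\mu_j)-(Y_{-jt}-\mu_{-j})'\alpha]^2$, $\Sigma_f^{1/2}$ the symmetric square root, $\bar A_{-j}=A_{-j}\Sigma_f^{1/2}$, $\bar a_j=\Sigma_f^{1/2}a_j$, $\bar G_j=I_K+\bar A_{-j}'\Sigma_{U,-j}^{-1}\bar A_{-j}$. Assumption 1: for each $j$, $(y_{jt},Y_{-jt})$ are iid over $t$; $u_{jt},U_{-jt}$ are zero mean and iid over $t$; $f_t$ iid over $t$; $f_t,u_{jt},U_{-jt}$ are mutually independent. Assumption 2: (i) $\min_j\lambda_{\min}(\Sigma_{U,-j})\ge c>0$, $\max_j\sigma_j^2=\sigma^2\le C<\infty$, $\min_j\sigma_j^2\ge c>0$; (ii) $\delta_n:=\min_j\|\Sigma_{U,-j}\|_2$ and $r_n:=\max_j\|\Sigma_{U,-j}\|_2$ are nondecreasing in $n$ and $r_n/p\to0$. Assumption 3: (i) $p\le n^{C_p/2}$ for a constant $C_p>0$; (ii) for each $j$, $A_{-j}$ has full rank $K$, $p>K+1$, $\max_j\|A_{-j}\|_2=O(d_{1n})$ with $d_{1n}\to\infty$ and $d_{1n}/\sqrt p\to0$; $\Sigma_f$ has full rank $K$ and $\lambda_{\max}(\Sigma_f)\le C<\infty$. 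*)

theory Defs
  imports "HOL-Probability.Probability" "Jordan_Normal_Form.Jordan_Normal_Form"
    "Jordan_Normal_Form.DL_Rank"
begin

definition cov :: "'a measure \<Rightarrow> ('a \<Rightarrow> real) \<Rightarrow> ('a \<Rightarrow> real) \<Rightarrow> real" where
  "cov M X Y = (\<integral>\<omega>. (X \<omega> - (\<integral>\<omega>'. X \<omega>' \<partial>M)) * (Y \<omega> - (\<integral>\<omega>'. Y \<omega>' \<partial>M)) \<partial>M)"

definition cov_mat :: "'a measure \<Rightarrow> ('a \<Rightarrow> nat \<Rightarrow> real) \<Rightarrow> nat \<Rightarrow> real mat" where
  "cov_mat M X n = mat n n (\<lambda>(i,l). cov M (\<lambda>\<omega>. X \<omega> i) (\<lambda>\<omega>. X \<omega> l))"

definition mat_inv :: "real mat \<Rightarrow> real mat" where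
  "mat_inv A = the (mat_inverse A)"

definition psd_mat :: "real mat \<Rightarrow> bool" where
  "psd_mat S \<longleftrightarrow> (\<forall>v \<in> carrier_vec (dim_row S). v \<bullet> (S *\<^sub>v v) \<ge> 0)"

definition mat_sqrt :: "real mat \<Rightarrow> real mat" where
  "mat_sqrt M = (THE S. S \<in> carrier_mat (dim_row M) (dim_row M) \<and> S\<^sup>T = S \<and> psd_mat S \<and> S * S = M)"

(* index j removed: position i of the (p-1)-vector corresponds to outcome insert_index j i *)
definition delete_index :: "nat \<Rightarrow> nat \<Rightarrow> nat" where
  "delete_index j l = (if l < j then l else l - 1)"

(* model quantities, for outcome j; u = idiosyncratic errors, f = factors, A = K x p loadings *)
definition A_minus :: "real mat \<Rightarrow> nat \<Rightarrow> nat \<Rightarrow> real mat" where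
  "A_minus A p j = mat (p - 1) (dim_row A) (\<lambda>(i,k). A $$ (k, insert_index j i))"

definition a_col :: "real mat \<Rightarrow> nat \<Rightarrow> real vec" where
  "a_col A j = vec (dim_row A) (\<lambda>k. A $$ (k, j))"

definition Sigma_U_minus :: "'a measure \<Rightarrow> ('a \<Rightarrow> nat \<Rightarrow> real) \<Rightarrow> nat \<Rightarrow> nat \<Rightarrow> real mat" where
  "Sigma_U_minus M u p j = cov_mat M (\<lambda>\<omega> i. u \<omega> (insert_index j i)) (p - 1)"

definition sigma2 :: "'a measure \<Rightarrow> ('a \<Rightarrow> nat \<Rightarrow> real) \<Rightarrow> nat \<Rightarrow> real" where
  "sigma2 M u j = cov M (\<lambda>\<omega>. u \<omega> j) (\<lambda>\<omega>. u \<omega> j)"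

definition alpha_star :: "'a measure \<Rightarrow> ('a \<Rightarrow> nat \<Rightarrow> real) \<Rightarrow> nat \<Rightarrow> nat \<Rightarrow> real vec" where
  "alpha_star M y p j = (THE \<alpha>. \<alpha> \<in> carrier_vec (p - 1) \<and>
     (\<forall>\<beta> \<in> carrier_vec (p - 1).
        (\<integral>\<omega>. ((y \<omega> j - (\<integral>\<omega>'. y \<omega>' j \<partial>M))
               - (\<Sum>i<p - 1. (y \<omega> (insert_index j i) - (\<integral>\<omega>'. y \<omega>' (insert_index j i) \<partial>M)) * \<alpha> $ i))\<^sup>2 \<partial>M)
        \<le> (\<integral>\<omega>. ((y \<omega> j - (\<integral>\<omega>'. y \<omega>' j \<partial>M))
               - (\<Sum>i<p - 1. (y \<omega> (insert_index j i) - (\<integral>\<omega>'. y \<omega>' (insert_index j i) \<partial>M)) * \<beta> $ i))\<^sup>2 \<partial>M)))"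

definition Abar :: "'a measure \<Rightarrow> ('a \<Rightarrow> nat \<Rightarrow> real) \<Rightarrow> real mat \<Rightarrow> nat \<Rightarrow> nat \<Rightarrow> real mat" where
  "Abar M f A p j = A_minus A p j * mat_sqrt (cov_mat M f (dim_row A))"

definition abar :: "'a measure \<Rightarrow> ('a \<Rightarrow> nat \<Rightarrow> real) \<Rightarrow> real mat \<Rightarrow> nat \<Rightarrow> real vec" where
  "abar M f A j = mat_sqrt (cov_mat M f (dim_row A)) *\<^sub>v a_col A j"

definition Gbar :: "'a measure \<Rightarrow> ('a \<Rightarrow> nat \<Rightarrow> real) \<Rightarrow> ('a \<Rightarrow> nat \<Rightarrow> real) \<Rightarrow> real mat \<Rightarrow> nat \<Rightarrow> nat \<Rightarrow> real mat" where
  "Gbar M f u A p j = 1\<^sub>m (dim_row A) + (Abar M f A p j)\<^sup>T * mat_inv (Sigma_U_minus M u p j) * Abar M f A p j"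

definition alpha_formula :: "'a measure \<Rightarrow> ('a \<Rightarrow> nat \<Rightarrow> real) \<Rightarrow> ('a \<Rightarrow> nat \<Rightarrow> real) \<Rightarrow> real mat \<Rightarrow> nat \<Rightarrow> nat \<Rightarrow> real vec" where
  "alpha_formula M f u A p j = mat_inv (Sigma_U_minus M u p j) *\<^sub>v (Abar M f A p j *\<^sub>v (mat_inv (Gbar M f u A p j) *\<^sub>v abar M f A j))"

definition tau2 :: "'a measure \<Rightarrow> ('a \<Rightarrow> nat \<Rightarrow> real) \<Rightarrow> ('a \<Rightarrow> nat \<Rightarrow> real) \<Rightarrow> real mat \<Rightarrow> nat \<Rightarrow> nat \<Rightarrow> real" where
  "tau2 M f u A p j = (abar M f A j \<bullet> abar M f A j + sigma2 M u j)
     - abar M f A j \<bullet> ((Abar M f A p j)\<^sup>T *\<^sub>v alpha_formula M f u A p j)"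

end

theory Submission
  imports Defs "Jordan_Normal_Form.Schur_Decomposition" "HOL-Computational_Algebra.Fundamental_Theorem_Algebra"
begin

lemma real_sym_eigen:
  fixes A :: "real mat"
  assumes A: "A \<in> carrier_mat n n" and sym: "A\<^sup>T = A" and n: "n > 0"
  shows "\<exists>l v. v \<in> carrier_vec n \<and> v \<noteq> 0\<^sub>v n \<and> A *\<^sub>v v = l \<cdot>\<^sub>v v"
proof -
  let ?C = "map_mat complex_of_real A"
  have C: "?C \<in> carrier_mat n n" using A by auto
  have deg: "degree (char_poly ?C) = n" using degree_monic_char_poly[OF C] by auto
  then obtain z where z: "poly (char_poly ?C) z = 0"
    using fundamental_theorem_of_algebra constant_degree n by (metis neq0_conv)
  hence "eigenvalue ?C z" using eigenvalue_root_char_poly[OF C] by auto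
  then obtain v where ev: "eigenvector ?C v z" unfolding eigenvalue_def by auto
  hence v: "v \<in> carrier_vec n" "v \<noteq> 0\<^sub>v n" "?C *\<^sub>v v = z \<cdot>\<^sub>v v"
    unfolding eigenvector_def using C by auto
  define q where "q = (\<Sum>i<n. \<Sum>k<n. cnj (v $ i) * ?C $$ (i,k) * v $ k)"
  define nv where "nv = (\<Sum>i<n. cnj (v $ i) * v $ i)"
  have Cv: "(\<Sum>k<n. ?C $$ (i,k) * v $ k) = z * v $ i" if i: "i < n" for i
  proof -
    have "(\<Sum>k<n. ?C $$ (i,k) * v $ k) = (?C *\<^sub>v v) $ i"
      using i v(1) C by (simp add: scalar_prod_def atLeast0LessThan)
    also have "\<dots> = z * v $ i" using v(3) i v by simp
    finally show ?thesis .
  qed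
  have "q = (\<Sum>i<n. cnj (v $ i) * (\<Sum>k<n. ?C $$ (i,k) * v $ k))"
    unfolding q_def by (simp add: sum_distrib_left mult.assoc)
  also have "\<dots> = z * nv" unfolding nv_def using Cv by (auto simp: sum_distrib_left intro!: sum.cong)
  finally have qz: "q = z * nv" .
  have "cnj q = (\<Sum>i<n. \<Sum>k<n. v $ i * ?C $$ (i,k) * cnj (v $ k))"
    unfolding q_def using A by (simp add: cnj_sum)
  also have "\<dots> = (\<Sum>k<n. \<Sum>i<n. v $ i * ?C $$ (i,k) * cnj (v $ k))" by (rule sum.swap)
  also have "\<dots> = q" unfolding q_def
  proof (intro sum.cong refl)
    fix k i assume "k \<in> {..<n}" "i \<in> {..<n}"
    hence "A $$ (i,k) = A $$ (k,i)" using sym A by (metis carrier_matD index_transpose_mat(1) lessThan_iff)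
    thus "v $ i * ?C $$ (i,k) * cnj (v $ k) = cnj (v $ k) * ?C $$ (k,i) * v $ i"
      using A \<open>k \<in> _\<close> \<open>i \<in> _\<close> by auto
  qed
  finally have qr: "cnj q = q" .
  have nvr: "cnj nv = nv" unfolding nv_def by (simp add: cnj_sum mult.commute)
  have "nv \<noteq> 0"
  proof
    assume "nv = 0"
    have "Re nv = (\<Sum>i<n. (Re (v $ i))\<^sup>2 + (Im (v $ i))\<^sup>2)" unfolding nv_def
      by (simp add: power2_eq_square sum.distrib)
    moreover obtain i where "i < n" "v $ i \<noteq> 0" using v by (metis eq_vecI carrier_vecD index_zero_vec)
    hence "(\<Sum>i<n. (Re (v $ i))\<^sup>2 + (Im (v $ i))\<^sup>2) > 0"
      by (intro sum_pos2[of _ i]) (auto simp: complex_neq_0)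
    ultimately show False using \<open>nv = 0\<close> by simp
  qed
  hence "z = q / nv" using qz by auto
  hence zr: "cnj z = z" using qr nvr by simp
  define l where "l = Re z"
  have zl: "z = complex_of_real l" using zr unfolding l_def by (metis Reals_cnj_iff complex_is_Real_iff of_real_Re)
  have "poly (char_poly ?C) z = complex_of_real (poly (char_poly A) l)"
    unfolding of_real_hom.char_poly_hom[OF A] zl by simp
  hence "poly (char_poly A) l = 0" using z by simp
  hence "eigenvalue A l" using eigenvalue_root_char_poly[OF A] by auto
  then obtain w where "eigenvector A w l" unfolding eigenvalue_def by auto
  thus ?thesis unfolding eigenvector_def using A by auto
qed

lemma conj_real_vec[simp]: "conjugate (w :: real vec) = w"
  by (rule eq_vecI) auto

lemma real_vec_self_pos:
  fixes v :: "real vec"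
  assumes "v \<in> carrier_vec n" "v \<noteq> 0\<^sub>v n"
  shows "v \<bullet> v > 0"
proof -
  obtain i where i: "i < n" "v $ i \<noteq> 0" using assms by (metis eq_vecI carrier_vecD index_zero_vec)
  have "v \<bullet> v = (\<Sum>k\<in>{0..<n}. v $ k * v $ k)" using assms by (simp add: scalar_prod_def)
  also have "\<dots> > 0" using i by (intro sum_pos2[of _ i]) (auto simp: zero_less_mult_iff linorder_neq_iff)
  finally show ?thesis .
qed

lemma transpose_A_W_entry:
  fixes A W :: "real mat"
  assumes A: "A \<in> carrier_mat n n" and W: "W \<in> carrier_mat n n" and i: "i < n" and k: "k < n"
  shows "(W\<^sup>T * A * W) $$ (i,k) = col W i \<bullet> (A *\<^sub>v col W k)"
proof -
  have "W\<^sup>T * A * W = W\<^sup>T * (A * W)" using A W by (intro assoc_mult_mat) auto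
  thus ?thesis using A W i k by (simp add: mult_mat_vec_def)
qed

lemma assoc_sq: "A \<in> carrier_mat n n \<Longrightarrow> B \<in> carrier_mat n n \<Longrightarrow> C \<in> carrier_mat n n \<Longrightarrow>
  A * B * C = A * (B * C)" by (rule assoc_mult_mat)

lemma spectral:
  fixes A :: "real mat"
  assumes "A \<in> carrier_mat n n" "A\<^sup>T = A"
  shows "\<exists>P \<in> carrier_mat n n. P\<^sup>T * P = 1\<^sub>m n \<and> P * P\<^sup>T = 1\<^sub>m n \<and> diagonal_mat (P\<^sup>T * A * P)"
  using assms
proof (induction n arbitrary: A)
  case 0
  show ?case by (intro bexI[of _ "1\<^sub>m 0"]) (auto simp: diagonal_mat_def)
next
  case (Suc n A)
  note A = Suc.prems(1) and sym = Suc.prems(2)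
  obtain l v where v: "v \<in> carrier_vec (Suc n)" "v \<noteq> 0\<^sub>v (Suc n)" "A *\<^sub>v v = l \<cdot>\<^sub>v v"
    using real_sym_eigen[OF A sym] by auto
  have vv: "v \<bullet> v > 0" using real_vec_self_pos v by auto
  define v0 where "v0 = (1 / sqrt (v \<bullet> v)) \<cdot>\<^sub>v v"
  have v0: "v0 \<in> carrier_vec (Suc n)" unfolding v0_def using v by auto
  have v0v0: "v0 \<bullet> v0 = 1" unfolding v0_def using v vv
    by (simp add: smult_scalar_prod_distrib scalar_prod_smult_distrib[of v "Suc n"])
  have v00: "v0 \<noteq> 0\<^sub>v (Suc n)" using v0v0 v0 by auto
  have Av0: "A *\<^sub>v v0 = l \<cdot>\<^sub>v v0" unfolding v0_def using v A
    by (simp add: mult_mat_vec smult_smult_assoc mult.commute)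
  interpret vs: vec_space "TYPE(real)" "Suc n" .
  define b where "b = basis_completion v0"
  note bc = vs.basis_completion[OF v0 v00, folded b_def]
  obtain vs where bv: "b = v0 # vs" using bc(6,7) by (cases b) auto
  interpret cvs: cof_vec_space "Suc n" "TYPE(real)" .
  define ws where "ws = gram_schmidt (Suc n) b"
  note gs = cvs.gram_schmidt_result[OF bc(2) bc(4) bc(5) ws_def]
  have hdws: "hd ws = v0" unfolding ws_def bv using v0 by simp
  have lws: "length ws = Suc n" using gs bc by auto
  have wsc: "\<And>i. i < Suc n \<Longrightarrow> ws ! i \<in> carrier_vec (Suc n)" using gs(3) lws by auto
  have wsorth: "\<And>i k. i < Suc n \<Longrightarrow> k < Suc n \<Longrightarrow> (ws ! i \<bullet> ws ! k = 0) = (i \<noteq> k)"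
    using gs(2) lws unfolding corthogonal_def by auto
  define us where "us = map (\<lambda>w. (1 / sqrt (w \<bullet> w)) \<cdot>\<^sub>v w) ws"
  have lus: "length us = Suc n" unfolding us_def using lws by simp
  have usc: "\<And>i. i < Suc n \<Longrightarrow> us ! i \<in> carrier_vec (Suc n)" unfolding us_def using wsc lws by auto
  have usorth: "us ! i \<bullet> us ! k = (if i = k then 1 else 0)" if i: "i < Suc n" and k: "k < Suc n" for i k
  proof -
    have pos: "ws ! j \<bullet> ws ! j > 0" if j: "j < Suc n" for j
    proof -
      have "ws ! j \<bullet> ws ! j \<noteq> 0" using wsorth[OF j j] by simp
      hence "ws ! j \<noteq> 0\<^sub>v (Suc n)" by auto
      thus ?thesis using real_vec_self_pos wsc[OF j] by auto
    qed
    have pi: "ws ! i \<bullet> ws ! i > 0" using pos i .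
    have pk: "ws ! k \<bullet> ws ! k > 0" using pos k .
    have "us ! i \<bullet> us ! k = (1 / sqrt (ws ! i \<bullet> ws ! i)) * (1 / sqrt (ws ! k \<bullet> ws ! k)) * (ws ! i \<bullet> ws ! k)"
      unfolding us_def using i k lws wsc[OF i] wsc[OF k]
      by (simp add: smult_scalar_prod_distrib scalar_prod_smult_distrib[of _ "Suc n"])
    thus ?thesis using wsorth[OF i k] pi pk
      by (cases "i = k") (auto simp: real_sqrt_mult[symmetric])
  qed
  define W where "W = mat_of_cols (Suc n) us"
  have W: "W \<in> carrier_mat (Suc n) (Suc n)" unfolding W_def using lus by auto
  have colW: "\<And>i. i < Suc n \<Longrightarrow> col W i = us ! i" unfolding W_def using lus usc by auto
  have WW: "W\<^sup>T * W = 1\<^sub>m (Suc n)"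
    by (rule eq_matI) (use W colW usorth in auto)
  have us0: "us ! 0 = v0" unfolding us_def using hdws lws v0v0
    by (cases ws) auto
  define A' where "A' = W\<^sup>T * A * W"
  have A': "A' \<in> carrier_mat (Suc n) (Suc n)" unfolding A'_def using A W by auto
  have A'sym: "A'\<^sup>T = A'"
  proof -
    have "A'\<^sup>T = W\<^sup>T * (W\<^sup>T * A)\<^sup>T" unfolding A'_def
      by (rule transpose_mult[of _ "Suc n" "Suc n"]) (use A W in auto)
    also have "(W\<^sup>T * A)\<^sup>T = A\<^sup>T * W\<^sup>T\<^sup>T"
      by (rule transpose_mult[of _ "Suc n" "Suc n"]) (use A W in auto)
    also have "W\<^sup>T * (A\<^sup>T * W\<^sup>T\<^sup>T) = A'" unfolding A'_def sym using A W
      by (simp add: assoc_sq[of _ "Suc n"])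
    finally show ?thesis .
  qed
  have A'e: "A' $$ (i,k) = col W i \<bullet> (A *\<^sub>v col W k)" if "i < Suc n" "k < Suc n" for i k
    unfolding A'_def using transpose_A_W_entry[OF A W that] .
  have A'col0: "A' $$ (i,0) = (if i = 0 then l else 0)" if i: "i < Suc n" for i
  proof -
    have "A' $$ (i,0) = us ! i \<bullet> (l \<cdot>\<^sub>v v0)" using A'e[OF i] colW i Av0 us0 by simp
    also have "\<dots> = l * (us ! i \<bullet> us ! 0)" using usc[OF i] v0 us0 by simp
    finally show ?thesis using usorth[OF i] by simp
  qed
  have A'row0: "A' $$ (0,k) = (if k = 0 then l else 0)" if k: "k < Suc n" for k
    using A'col0[OF k] A'sym A' k by (metis carrier_matD index_transpose_mat(1) zero_less_Suc)
  define A3 where "A3 = mat n n (\<lambda>(i,k). A' $$ (Suc i, Suc k))"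
  have A3: "A3 \<in> carrier_mat n n" unfolding A3_def by auto
  have A3sym: "A3\<^sup>T = A3" unfolding A3_def
    by (rule eq_matI) (use A'sym A' in \<open>auto, metis carrier_matD index_transpose_mat(1) Suc_less_eq\<close>)
  obtain P3 where P3: "P3 \<in> carrier_mat n n" "P3\<^sup>T * P3 = 1\<^sub>m n" "P3 * P3\<^sup>T = 1\<^sub>m n"
    "diagonal_mat (P3\<^sup>T * A3 * P3)" using Suc.IH[OF A3 A3sym] by auto
  have A'b: "A' = four_block_mat (mat 1 1 (\<lambda>_. l)) (0\<^sub>m 1 n) (0\<^sub>m n 1) A3"
  proof (rule eq_matI)
    fix i k assume "i < dim_row (four_block_mat (mat 1 1 (\<lambda>_. l)) (0\<^sub>m 1 n) (0\<^sub>m n 1) A3)"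
      "k < dim_col (four_block_mat (mat 1 1 (\<lambda>_. l)) (0\<^sub>m 1 n) (0\<^sub>m n 1) A3)"
    hence ik: "i < Suc n" "k < Suc n" using A3 by auto
    show "A' $$ (i, k) = four_block_mat (mat 1 1 (\<lambda>_. l)) (0\<^sub>m 1 n) (0\<^sub>m n 1) A3 $$ (i, k)"
    proof (cases i)
      case 0 thus ?thesis using ik A3 A'row0 by auto
    next
      case (Suc i') note i' = this
      show ?thesis
      proof (cases k)
        case 0 thus ?thesis using ik A3 A'col0 i' by auto
      next
        case (Suc k') thus ?thesis using ik A3 i' unfolding A3_def by auto
      qed
    qed
  qed (use A' A3 in auto)
  define B where "B = four_block_mat (1\<^sub>m 1) (0\<^sub>m 1 n) (0\<^sub>m n 1) P3"
  have B: "B \<in> carrier_mat (Suc n) (Suc n)" unfolding B_def using P3 by auto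
  have BT: "B\<^sup>T = four_block_mat (1\<^sub>m 1) (0\<^sub>m 1 n) (0\<^sub>m n 1) P3\<^sup>T"
    unfolding B_def using P3 by (subst transpose_four_block_mat) auto
  have BB: "B\<^sup>T * B = 1\<^sub>m (Suc n)" unfolding BT unfolding B_def using P3
    by (subst mult_four_block_mat[of _ 1 1 _ n _ n _ _ 1 _ n]) auto
  define P where "P = W * B"
  have P: "P \<in> carrier_mat (Suc n) (Suc n)" unfolding P_def using W B by auto
  have PT: "P\<^sup>T = B\<^sup>T * W\<^sup>T" unfolding P_def using W B by (simp add: transpose_mult)
  have PP: "P\<^sup>T * P = 1\<^sub>m (Suc n)"
  proof -
    have "P\<^sup>T * P = B\<^sup>T * (W\<^sup>T * W) * B" unfolding PT unfolding P_def using W B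
      by (simp add: assoc_sq[of _ "Suc n"])
    thus ?thesis using WW BB B by simp
  qed
  have PP2: "P * P\<^sup>T = 1\<^sub>m (Suc n)"
    using mat_mult_left_right_inverse[OF _ P PP] P by auto
  have "P\<^sup>T * A * P = B\<^sup>T * A' * B" unfolding PT unfolding P_def A'_def using W B A
    by (simp add: assoc_sq[of _ "Suc n"])
  also have "\<dots> = four_block_mat (mat 1 1 (\<lambda>_. l)) (0\<^sub>m 1 n) (0\<^sub>m n 1) (P3\<^sup>T * A3 * P3)"
    unfolding BT A'b unfolding B_def using P3 A3
    by (simp add: mult_four_block_mat[of _ 1 1 _ n _ n _ _ 1 _ n])
  finally have "P\<^sup>T * A * P = \<dots>" .
  moreover have "diagonal_mat (four_block_mat (mat 1 1 (\<lambda>_. l)) (0\<^sub>m 1 n) (0\<^sub>m n 1) (P3\<^sup>T * A3 * P3))"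
    using P3(4) P3(1) A3 unfolding diagonal_mat_def by auto
  ultimately show ?case using P PP PP2 by auto
qed


lemma col_mult_diag:
  fixes P D :: "real mat"
  assumes P: "P \<in> carrier_mat m n" and D: "D \<in> carrier_mat n n" and dg: "diagonal_mat D" and i: "i < n"
  shows "col (P * D) i = D $$ (i,i) \<cdot>\<^sub>v col P i"
proof (rule eq_vecI)
  fix r assume r: "r < dim_vec (D $$ (i,i) \<cdot>\<^sub>v col P i)"
  hence r: "r < m" using P by auto
  have "col (P * D) i $ r = (\<Sum>k\<in>{0..<n}. P $$ (r,k) * D $$ (k,i))"
    using P D i r by (simp add: scalar_prod_def)
  also have "\<dots> = (\<Sum>k\<in>{0..<n}. if k = i then P $$ (r,i) * D $$ (i,i) else 0)"
    using dg D i unfolding diagonal_mat_def by (intro sum.cong) auto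
  also have "\<dots> = P $$ (r,i) * D $$ (i,i)" using i by simp
  finally show "col (P * D) i $ r = (D $$ (i,i) \<cdot>\<^sub>v col P i) $ r" using r P i by simp
qed (use P D i in auto)

lemma diag_mult_vec:
  fixes D :: "real mat"
  assumes D: "D \<in> carrier_mat n n" and dg: "diagonal_mat D" and w: "w \<in> carrier_vec n" and i: "i < n"
  shows "(D *\<^sub>v w) $ i = D $$ (i,i) * w $ i"
proof -
  have "(D *\<^sub>v w) $ i = (\<Sum>k\<in>{0..<n}. D $$ (i,k) * w $ k)" using D w i by (simp add: scalar_prod_def)
  also have "\<dots> = (\<Sum>k\<in>{0..<n}. if k = i then D $$ (i,i) * w $ i else 0)"
    using dg D i unfolding diagonal_mat_def by (intro sum.cong) auto
  finally show ?thesis using i by simp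
qed

lemma mat_col_eq_sq:
  fixes X Y :: "real mat"
  assumes "X \<in> carrier_mat n n" "Y \<in> carrier_mat n n" "\<And>i. i < n \<Longrightarrow> col X i = col Y i"
  shows "X = Y"
  by (rule mat_col_eqI) (use assms in auto)

lemma psd_sqrt_unique_exists:
  fixes S :: "real mat"
  assumes S: "S \<in> carrier_mat n n" and sym: "S\<^sup>T = S" and psd: "psd_mat S"
  shows "\<exists>!R. R \<in> carrier_mat (dim_row S) (dim_row S) \<and> R\<^sup>T = R \<and> psd_mat R \<and> R * R = S"
proof -
  have dS: "dim_row S = n" using S by auto
  obtain P where P: "P \<in> carrier_mat n n" "P\<^sup>T * P = 1\<^sub>m n" "P * P\<^sup>T = 1\<^sub>m n" and
    dg: "diagonal_mat (P\<^sup>T * S * P)" using spectral[OF S sym] by auto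
  define L where "L = P\<^sup>T * S * P"
  have L: "L \<in> carrier_mat n n" unfolding L_def using P S by auto
  have Lnn: "L $$ (i,i) \<ge> 0" if i: "i < n" for i
  proof -
    have "L $$ (i,i) = col P i \<bullet> (S *\<^sub>v col P i)" unfolding L_def by (rule transpose_A_W_entry[OF S P(1) i i])
    thus ?thesis using psd S P i unfolding psd_mat_def by auto
  qed
  have SP: "S * P = P * L"
  proof -
    have "P * L = P * P\<^sup>T * S * P" unfolding L_def using P(1) S by (simp add: assoc_sq[of _ n])
    also have "\<dots> = S * P" unfolding P(3) using P S by simp
    finally show ?thesis by simp
  qed
  have Sp: "S *\<^sub>v col P i = L $$ (i,i) \<cdot>\<^sub>v col P i" if i: "i < n" for i
  proof -
    have "S *\<^sub>v col P i = col (S * P) i" using S P i by (simp add: mult_mat_vec_def)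
    also have "\<dots> = L $$ (i,i) \<cdot>\<^sub>v col P i" unfolding SP using col_mult_diag[OF P(1) L dg[folded L_def] i] .
    finally show ?thesis .
  qed
  define Dh where "Dh = mat n n (\<lambda>(i,k). if i = k then sqrt (L $$ (i,i)) else 0)"
  have Dh: "Dh \<in> carrier_mat n n" unfolding Dh_def by auto
  have dgDh: "diagonal_mat Dh" unfolding Dh_def diagonal_mat_def by auto
  have DhT: "Dh\<^sup>T = Dh" unfolding Dh_def by (rule eq_matI) auto
  have DhDh: "Dh * Dh = L"
  proof (rule mat_col_eq_sq[OF _ L])
    fix i assume i: "i < n"
    have "col (Dh * Dh) i = sqrt (L $$ (i,i)) \<cdot>\<^sub>v col Dh i" using col_mult_diag[OF Dh Dh dgDh i] i
      unfolding Dh_def by simp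
    also have "\<dots> = col L i"
    proof (rule eq_vecI)
      fix r assume "r < dim_vec (col L i)"
      hence r: "r < n" using L by auto
      show "(sqrt (L $$ (i,i)) \<cdot>\<^sub>v col Dh i) $ r = col L i $ r"
        using r i L dg[folded L_def] Lnn[OF i] unfolding Dh_def diagonal_mat_def by auto
    qed (use L Dh i in auto)
    finally show "col (Dh * Dh) i = col L i" .
  qed (use Dh in auto)
  define R where "R = P * Dh * P\<^sup>T"
  have R: "R \<in> carrier_mat n n" unfolding R_def using P Dh by auto
  have RT: "R\<^sup>T = R"
  proof -
    have "R\<^sup>T = P\<^sup>T\<^sup>T * (P * Dh)\<^sup>T" unfolding R_def by (rule transpose_mult) (use P Dh in auto)
    also have "(P * Dh)\<^sup>T = Dh\<^sup>T * P\<^sup>T" by (rule transpose_mult) (use P Dh in auto)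
    finally show ?thesis unfolding DhT R_def using P Dh by (simp add: assoc_sq[of _ n])
  qed
  have RR: "R * R = S"
  proof -
    have "R * R = P * Dh * (P\<^sup>T * P) * Dh * P\<^sup>T" unfolding R_def using P(1) Dh by (simp add: assoc_sq[of _ n])
    also have "\<dots> = P * L * P\<^sup>T" unfolding P(2) using P(1) Dh by (simp add: assoc_sq[of _ n] DhDh[symmetric])
    also have "\<dots> = (P * P\<^sup>T) * S * (P * P\<^sup>T)" unfolding L_def using P(1) S by (simp add: assoc_sq[of _ n])
    also have "\<dots> = S" unfolding P(3) using S by simp
    finally show ?thesis .
  qed
  have Rpsd: "psd_mat R" unfolding psd_mat_def
  proof
    fix v :: "real vec" assume "v \<in> carrier_vec (dim_row R)"
    hence v: "v \<in> carrier_vec n" using R by auto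
    define w where "w = P\<^sup>T *\<^sub>v v"
    have w: "w \<in> carrier_vec n" unfolding w_def using P v by auto
    have "v \<bullet> (R *\<^sub>v v) = v \<bullet> (P *\<^sub>v (Dh *\<^sub>v w))" unfolding R_def w_def using P Dh v
      by (simp add: assoc_mult_mat_vec[of _ n n _ n])
    also have "\<dots> = w \<bullet> (Dh *\<^sub>v w)" unfolding w_def
      using transpose_vec_mult_scalar[of P n n "Dh *\<^sub>v (P\<^sup>T *\<^sub>v v)" v] P Dh v
      by (simp add: comm_scalar_prod[of _ n])
    also have "\<dots> = (\<Sum>i\<in>{0..<n}. w $ i * (sqrt (L $$ (i,i)) * w $ i))"
      unfolding scalar_prod_def using w Dh diag_mult_vec[OF Dh dgDh w] by (auto simp: Dh_def)
    also have "\<dots> \<ge> 0"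
    proof (intro sum_nonneg)
      fix i assume "i \<in> {0..<n}"
      hence "sqrt (L $$ (i,i)) \<ge> 0" using Lnn by simp
      moreover have "w $ i * (sqrt (L $$ (i,i)) * w $ i) = sqrt (L $$ (i,i)) * (w $ i * w $ i)" by simp
      ultimately show "w $ i * (sqrt (L $$ (i,i)) * w $ i) \<ge> 0" by (metis mult_nonneg_nonneg zero_le_square)
    qed
    finally show "v \<bullet> (R *\<^sub>v v) \<ge> 0" .
  qed
  show ?thesis
  proof (rule ex1I[of _ R])
    show "R \<in> carrier_mat (dim_row S) (dim_row S) \<and> R\<^sup>T = R \<and> psd_mat R \<and> R * R = S"
      using R RT Rpsd RR dS by auto
  next
    fix T assume "T \<in> carrier_mat (dim_row S) (dim_row S) \<and> T\<^sup>T = T \<and> psd_mat T \<and> T * T = S"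
    hence T: "T \<in> carrier_mat n n" and TT: "T\<^sup>T = T" and Tpsd: "psd_mat T" and TS: "T * T = S"
      using dS by auto
    have Tp: "T *\<^sub>v col P i = sqrt (L $$ (i,i)) \<cdot>\<^sub>v col P i" if i: "i < n" for i
    proof -
      define p where "p = col P i"
      define mu where "mu = sqrt (L $$ (i,i))"
      have p: "p \<in> carrier_vec n" unfolding p_def using P i by auto
      have mu: "mu \<ge> 0" unfolding mu_def using Lnn[OF i] by simp
      have mu2: "mu * mu = L $$ (i,i)" unfolding mu_def using Lnn[OF i] by simp
      define x where "x = T *\<^sub>v p - mu \<cdot>\<^sub>v p"
      have x: "x \<in> carrier_vec n" unfolding x_def using T p by auto
      have Sp': "T *\<^sub>v (T *\<^sub>v p) = (mu * mu) \<cdot>\<^sub>v p"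
        using Sp[OF i] TS T p mu2 unfolding p_def by (simp add: assoc_mult_mat_vec[symmetric, of _ n n _ n])
      have Tx1: "T *\<^sub>v x = T *\<^sub>v (T *\<^sub>v p) - mu \<cdot>\<^sub>v (T *\<^sub>v p)"
        unfolding x_def using T p by (simp add: mult_minus_distrib_mat_vec[of _ n n] mult_mat_vec[of _ n n])
      have Tx: "T *\<^sub>v x + mu \<cdot>\<^sub>v x = 0\<^sub>v n"
      proof (rule eq_vecI)
        fix r assume "r < dim_vec (0\<^sub>v n :: real vec)"
        hence r: "r < n" by simp
        have "(T *\<^sub>v x) $ r = (mu * mu) * p $ r - mu * (T *\<^sub>v p) $ r"
          unfolding Tx1 Sp' using r T p by simp
        moreover have "(mu \<cdot>\<^sub>v x) $ r = mu * (T *\<^sub>v p) $ r - mu * mu * p $ r"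
          unfolding x_def using r T p by (simp add: right_diff_distrib)
        ultimately show "(T *\<^sub>v x + mu \<cdot>\<^sub>v x) $ r = 0\<^sub>v n $ r" using r T x by simp
      qed (use T x in auto)
      have "x \<bullet> (T *\<^sub>v x) + mu * (x \<bullet> x) = x \<bullet> (T *\<^sub>v x + mu \<cdot>\<^sub>v x)"
        using x T by (simp add: scalar_prod_add_distrib[of _ n] scalar_prod_smult_distrib[of _ n])
      also have "\<dots> = 0" using Tx x by simp
      finally have eq0: "x \<bullet> (T *\<^sub>v x) + mu * (x \<bullet> x) = 0" .
      have xTx: "x \<bullet> (T *\<^sub>v x) \<ge> 0" using Tpsd x T unfolding psd_mat_def by auto
      have xx: "x \<bullet> x \<ge> 0" using x by (simp add: scalar_prod_def sum_nonneg)
      have "x \<bullet> x = 0"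
      proof (cases "mu = 0")
        case False
        have "mu * (x \<bullet> x) \<ge> 0" using mu xx by simp
        hence "mu * (x \<bullet> x) = 0" using eq0 xTx by linarith
        thus ?thesis using False by simp
      next
        case True
        hence xe: "x = T *\<^sub>v p" unfolding x_def using T p by auto
        have "x \<bullet> x = p \<bullet> (T\<^sup>T *\<^sub>v (T *\<^sub>v p))" unfolding xe
          using transpose_vec_mult_scalar[of "T" n n p "T *\<^sub>v p"] T p
          by (simp add: comm_scalar_prod[of _ n])
        also have "\<dots> = 0" unfolding TT Sp' using True p by simp
        finally show ?thesis .
      qed
      hence "x = 0\<^sub>v n"
      proof (rule contrapos_pp)
        assume "x \<noteq> 0\<^sub>v n"
        from real_vec_self_pos[OF x this] show "x \<bullet> x \<noteq> 0" by simp
      qed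
      hence x0: "x = 0\<^sub>v n" .
      have "T *\<^sub>v p = mu \<cdot>\<^sub>v p"
      proof (rule eq_vecI)
        fix r assume "r < dim_vec (mu \<cdot>\<^sub>v p)"
        hence r: "r < n" using p by simp
        have "x $ r = 0" using x0 r by simp
        thus "(T *\<^sub>v p) $ r = (mu \<cdot>\<^sub>v p) $ r" unfolding x_def using r T p by simp
      qed (use T p in auto)
      thus ?thesis unfolding p_def mu_def .
    qed
    have "T * P = R * P"
    proof (rule mat_col_eq_sq)
      fix i assume i: "i < n"
      have "R * P = P * Dh" unfolding R_def using P Dh by (simp add: assoc_sq[of _ n])
      hence "col (R * P) i = sqrt (L $$ (i,i)) \<cdot>\<^sub>v col P i"
        using col_mult_diag[OF P(1) Dh dgDh i] i unfolding Dh_def by simp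
      thus "col (T * P) i = col (R * P) i" using Tp[OF i] T P i by (simp add: mult_mat_vec_def)
    qed (use T R P in auto)
    hence "T * P * P\<^sup>T = R * P * P\<^sup>T" by simp
    thus "T = R" using T R P by (simp add: assoc_sq[of _ n])
  qed
qed

lemma mat_sqrt_props:
  fixes S :: "real mat"
  assumes S: "S \<in> carrier_mat n n" and sym: "S\<^sup>T = S" and psd: "psd_mat S"
  shows "mat_sqrt S \<in> carrier_mat n n" "(mat_sqrt S)\<^sup>T = mat_sqrt S" "mat_sqrt S * mat_sqrt S = S"
proof -
  from theI'[OF psd_sqrt_unique_exists[OF assms]]
  have "mat_sqrt S \<in> carrier_mat (dim_row S) (dim_row S) \<and> (mat_sqrt S)\<^sup>T = mat_sqrt S \<and> psd_mat (mat_sqrt S) \<and> mat_sqrt S * mat_sqrt S = S"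
    unfolding mat_sqrt_def .
  thus "mat_sqrt S \<in> carrier_mat n n" "(mat_sqrt S)\<^sup>T = mat_sqrt S" "mat_sqrt S * mat_sqrt S = S"
    using S by auto
qed


lemma mat_inv_props:
  fixes X :: "real mat"
  assumes X: "X \<in> carrier_mat n n" and inj: "\<And>v. v \<in> carrier_vec n \<Longrightarrow> X *\<^sub>v v = 0\<^sub>v n \<Longrightarrow> v = 0\<^sub>v n"
  shows "mat_inv X \<in> carrier_mat n n" "X * mat_inv X = 1\<^sub>m n" "mat_inv X * X = 1\<^sub>m n" "invertible_mat X"
proof -
  have "det X \<noteq> 0" using det_0_iff_vec_prod_zero_field[OF X] inj by auto
  from det_non_zero_imp_unit[OF X this, of "()"]
  have U: "X \<in> Units (ring_mat TYPE(real) n ())" .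
  have "mat_inverse X \<noteq> None" using mat_inverse(1)[OF X, of "()"] U by auto
  then obtain B where B: "mat_inverse X = Some B" by auto
  from mat_inverse(2)[OF X B] have *: "X * B = 1\<^sub>m n" "B * X = 1\<^sub>m n" "B \<in> carrier_mat n n" by auto
  have mB: "mat_inv X = B" unfolding mat_inv_def B by simp
  show "mat_inv X \<in> carrier_mat n n" "X * mat_inv X = 1\<^sub>m n" "mat_inv X * X = 1\<^sub>m n" using * mB by auto
  show "invertible_mat X" unfolding invertible_mat_def inverts_mat_def square_mat.simps
    using * X by (intro conjI exI[of _ B]) auto
qed

lemma bil_sum:
  fixes S :: "real mat"
  assumes S: "S \<in> carrier_mat n n" and x: "x \<in> carrier_vec n" and z: "z \<in> carrier_vec n"
  shows "x \<bullet> (S *\<^sub>v z) = (\<Sum>k<n. \<Sum>k'<n. x $ k * z $ k' * S $$ (k,k'))"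
proof -
  have "x \<bullet> (S *\<^sub>v z) = (\<Sum>k<n. x $ k * (\<Sum>k'<n. S $$ (k,k') * z $ k'))"
    using S x z by (simp add: scalar_prod_def atLeast0LessThan)
  also have "\<dots> = (\<Sum>k<n. \<Sum>k'<n. x $ k * z $ k' * S $$ (k,k'))"
    by (simp add: sum_distrib_left mult.commute mult.left_commute)
  finally show ?thesis .
qed

lemma sandwich_entry:
  fixes X S :: "real mat"
  assumes X: "X \<in> carrier_mat m n" and S: "S \<in> carrier_mat n n" and r: "r < m" and s: "s < m"
  shows "(X * S * X\<^sup>T) $$ (r,s) = row X r \<bullet> (S *\<^sub>v row X s)"
proof -
  have "X * S * X\<^sup>T = X * (S * X\<^sup>T)" using X S by (intro assoc_mult_mat) auto
  thus ?thesis using X S r s by (simp add: mult_mat_vec_def)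
qed

lemma quad_vec:
  fixes S :: "real mat"
  assumes S: "S \<in> carrier_mat n n"
  shows "vec n w \<bullet> (S *\<^sub>v vec n w) = (\<Sum>l<n. \<Sum>m<n. w l * w m * S $$ (l,m))"
  using bil_sum[OF S, of "vec n w" "vec n w"] by simp

definition L2 :: "'a measure \<Rightarrow> ('a \<Rightarrow> real) \<Rightarrow> bool" where
  "L2 M X \<longleftrightarrow> X \<in> borel_measurable M \<and> integrable M (\<lambda>\<omega>. (X \<omega>)\<^sup>2)"

context prob_space
begin

lemma L2_int: "L2 M X \<Longrightarrow> integrable M X"
  unfolding L2_def by (auto intro: square_integrable_imp_integrable)

lemma L2_mult_int:
  assumes "L2 M X" "L2 M Y"
  shows "integrable M (\<lambda>\<omega>. X \<omega> * Y \<omega>)"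
proof (rule Bochner_Integration.integrable_bound[of _ "\<lambda>\<omega>. (X \<omega>)\<^sup>2 + (Y \<omega>)\<^sup>2"])
  show "integrable M (\<lambda>\<omega>. (X \<omega>)\<^sup>2 + (Y \<omega>)\<^sup>2)" using assms unfolding L2_def by auto
  show "(\<lambda>\<omega>. X \<omega> * Y \<omega>) \<in> borel_measurable M" using assms unfolding L2_def by auto
  show "AE x in M. norm (X x * Y x) \<le> norm ((X x)\<^sup>2 + (Y x)\<^sup>2)"
  proof (intro AE_I2)
    fix x
    have "2 * \<bar>X x * Y x\<bar> \<le> (X x)\<^sup>2 + (Y x)\<^sup>2"
    proof -
      have "0 \<le> (\<bar>X x\<bar> - \<bar>Y x\<bar>)\<^sup>2" by simp
      also have "\<dots> = (X x)\<^sup>2 + (Y x)\<^sup>2 - 2 * \<bar>X x * Y x\<bar>"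
        by (simp add: power2_eq_square algebra_simps abs_mult)
      finally show ?thesis by simp
    qed
    thus "norm (X x * Y x) \<le> norm ((X x)\<^sup>2 + (Y x)\<^sup>2)" by simp
  qed
qed

lemma L2_add: "L2 M X \<Longrightarrow> L2 M Y \<Longrightarrow> L2 M (\<lambda>\<omega>. X \<omega> + Y \<omega>)"
proof -
  assume a: "L2 M X" "L2 M Y"
  have "integrable M (\<lambda>\<omega>. (X \<omega>)\<^sup>2 + 2 * (X \<omega> * Y \<omega>) + (Y \<omega>)\<^sup>2)"
    using a L2_mult_int[OF a] unfolding L2_def by auto
  moreover have "(\<lambda>\<omega>. (X \<omega> + Y \<omega>)\<^sup>2) = (\<lambda>\<omega>. (X \<omega>)\<^sup>2 + 2 * (X \<omega> * Y \<omega>) + (Y \<omega>)\<^sup>2)"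
    by (auto simp: power2_eq_square algebra_simps)
  ultimately show ?thesis using a unfolding L2_def by auto
qed

lemma L2_cmult: "L2 M X \<Longrightarrow> L2 M (\<lambda>\<omega>. c * X \<omega>)"
proof -
  assume a: "L2 M X"
  have "(\<lambda>\<omega>. (c * X \<omega>)\<^sup>2) = (\<lambda>\<omega>. c\<^sup>2 * (X \<omega>)\<^sup>2)" by (auto simp: power_mult_distrib)
  thus ?thesis using a unfolding L2_def by auto
qed

lemma L2_multc: "L2 M X \<Longrightarrow> L2 M (\<lambda>\<omega>. X \<omega> * c)"
  using L2_cmult[of X c] by (simp add: mult.commute)

lemma L2_const: "L2 M (\<lambda>\<omega>. c)"
  unfolding L2_def by auto

lemma L2_diff: "L2 M X \<Longrightarrow> L2 M Y \<Longrightarrow> L2 M (\<lambda>\<omega>. X \<omega> - Y \<omega>)"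
  using L2_add[of X "\<lambda>\<omega>. (-1) * Y \<omega>"] L2_cmult[of Y "-1"] by simp

lemma L2_sum: "finite S \<Longrightarrow> (\<And>a. a \<in> S \<Longrightarrow> L2 M (X a)) \<Longrightarrow> L2 M (\<lambda>\<omega>. \<Sum>a\<in>S. X a \<omega>)"
proof (induction S rule: finite_induct)
  case empty thus ?case using L2_const[of 0] by simp
next
  case (insert x F) thus ?case using L2_add[of "X x" "\<lambda>\<omega>. \<Sum>a\<in>F. X a \<omega>"] by simp
qed

lemma L2_bilin:
  assumes S: "finite S" and T: "finite T" and X: "\<And>a. a \<in> S \<Longrightarrow> L2 M (X a)"
    and Y: "\<And>b. b \<in> T \<Longrightarrow> L2 M (Y b)"
  shows "(\<integral>\<omega>. (\<Sum>a\<in>S. c a * X a \<omega>) * (\<Sum>b\<in>T. d b * Y b \<omega>) \<partial>M)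
       = (\<Sum>a\<in>S. \<Sum>b\<in>T. c a * d b * (\<integral>\<omega>. X a \<omega> * Y b \<omega> \<partial>M))"
proof -
  have "(\<lambda>\<omega>. (\<Sum>a\<in>S. c a * X a \<omega>) * (\<Sum>b\<in>T. d b * Y b \<omega>))
      = (\<lambda>\<omega>. \<Sum>a\<in>S. \<Sum>b\<in>T. c a * d b * (X a \<omega> * Y b \<omega>))"
    by (auto simp: sum_product algebra_simps)
  hence "(\<integral>\<omega>. (\<Sum>a\<in>S. c a * X a \<omega>) * (\<Sum>b\<in>T. d b * Y b \<omega>) \<partial>M)
      = (\<integral>\<omega>. (\<Sum>a\<in>S. \<Sum>b\<in>T. c a * d b * (X a \<omega> * Y b \<omega>)) \<partial>M)" by simp
  also have "\<dots> = (\<Sum>a\<in>S. \<integral>\<omega>. (\<Sum>b\<in>T. c a * d b * (X a \<omega> * Y b \<omega>)) \<partial>M)"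
    by (rule Bochner_Integration.integral_sum) (use L2_mult_int X Y in \<open>auto intro!: integrable_sum integrable_mult_right\<close>)
  also have "\<dots> = (\<Sum>a\<in>S. \<Sum>b\<in>T. \<integral>\<omega>. c a * d b * (X a \<omega> * Y b \<omega>) \<partial>M)"
    using L2_mult_int X Y by (intro sum.cong refl Bochner_Integration.integral_sum integrable_mult_right) auto
  also have "\<dots> = (\<Sum>a\<in>S. \<Sum>b\<in>T. c a * d b * (\<integral>\<omega>. X a \<omega> * Y b \<omega> \<partial>M))"
    by simp
  finally show ?thesis .
qed

lemma L2_lin1:
  assumes S: "finite S" and X: "\<And>a. a \<in> S \<Longrightarrow> L2 M (X a)" and Z: "L2 M Z"
  shows "(\<integral>\<omega>. (\<Sum>a\<in>S. c a * X a \<omega>) * Z \<omega> \<partial>M) = (\<Sum>a\<in>S. c a * (\<integral>\<omega>. X a \<omega> * Z \<omega> \<partial>M))"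
proof -
  have "(\<integral>\<omega>. (\<Sum>a\<in>S. c a * X a \<omega>) * Z \<omega> \<partial>M) = (\<integral>\<omega>. (\<Sum>a\<in>S. c a * (X a \<omega> * Z \<omega>)) \<partial>M)"
    by (simp add: sum_distrib_right mult.assoc)
  also have "\<dots> = (\<Sum>a\<in>S. \<integral>\<omega>. c a * (X a \<omega> * Z \<omega>) \<partial>M)"
    by (rule Bochner_Integration.integral_sum) (use L2_mult_int X Z in \<open>auto intro!: integrable_mult_right\<close>)
  finally show ?thesis by simp
qed

lemma indep_prod_integral:
  fixes X :: "nat \<Rightarrow> 'a \<Rightarrow> (nat \<Rightarrow> real)"
  assumes ind: "indep_vars (\<lambda>g. PiM (I g) (\<lambda>_. borel)) X {0, 1, 2::nat}"
    and a: "a \<in> {0,1,2}" and b: "b \<in> {0,1,2}" and ab: "a \<noteq> b"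
    and k: "k \<in> I a" and l: "l \<in> I b"
    and ia: "integrable M (\<lambda>\<omega>. X a \<omega> k)" and ib: "integrable M (\<lambda>\<omega>. X b \<omega> l)"
  shows "(\<integral>\<omega>. X a \<omega> k * X b \<omega> l \<partial>M) = (\<integral>\<omega>. X a \<omega> k \<partial>M) * (\<integral>\<omega>. X b \<omega> l \<partial>M)"
proof -
  define Y where "Y g x = (if g = a then x k else if g = b then x l else (0::real))" for g and x :: "nat \<Rightarrow> real"
  have "indep_vars (\<lambda>_. borel) (\<lambda>g \<omega>. Y g (X g \<omega>)) {0,1,2::nat}"
  proof (rule indep_vars_compose2[OF ind])
    fix g assume "g \<in> {0,1,2::nat}"
    show "Y g \<in> measurable (PiM (I g) (\<lambda>_. borel)) borel"
      unfolding Y_def using k l by (cases "g = a"; cases "g = b") auto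
  qed
  hence ind2: "indep_vars (\<lambda>_. borel) (\<lambda>g \<omega>. Y g (X g \<omega>)) {a,b}"
    by (rule indep_vars_subset) (use a b in auto)
  have int2: "integrable M (\<lambda>\<omega>. Y g (X g \<omega>))" if "g \<in> {a,b}" for g
    using that ia ib ab unfolding Y_def by auto
  have "(\<integral>\<omega>. (\<Prod>g\<in>{a,b}. Y g (X g \<omega>)) \<partial>M) = (\<Prod>g\<in>{a,b}. \<integral>\<omega>. Y g (X g \<omega>) \<partial>M)"
    by (rule indep_vars_lebesgue_integral[OF _ ind2 int2]) auto
  thus ?thesis using ab unfolding Y_def by simp
qed

end

locale fmod = prob_space M for M :: "'a measure" +
  fixes f u y :: "'a \<Rightarrow> nat \<Rightarrow> real" and A :: "real mat" and p K :: nat and c :: real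
  assumes A_dim: "A \<in> carrier_mat K p"
    and model: "\<And>\<omega> i. i < p \<Longrightarrow> y \<omega> i = (\<Sum>k<K. f \<omega> k * A $$ (k, i)) + u \<omega> i"
    and f_meas: "\<And>k. k < K \<Longrightarrow> (\<lambda>\<omega>. f \<omega> k) \<in> borel_measurable M"
    and u_meas: "\<And>i. i < p \<Longrightarrow> (\<lambda>\<omega>. u \<omega> i) \<in> borel_measurable M"
    and f_L2: "\<And>k. k < K \<Longrightarrow> integrable M (\<lambda>\<omega>. (f \<omega> k)\<^sup>2)"
    and u_L2: "\<And>i. i < p \<Longrightarrow> integrable M (\<lambda>\<omega>. (u \<omega> i)\<^sup>2)"
    and u_mean: "\<And>i. i < p \<Longrightarrow> (\<integral>\<omega>. u \<omega> i \<partial>M) = 0"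
    and indep: "\<And>j. j < p \<Longrightarrow> indep_vars
        (\<lambda>g. PiM (case g of 0 \<Rightarrow> {..<K} | Suc 0 \<Rightarrow> {j} | _ \<Rightarrow> {..<p} - {j}) (\<lambda>_. borel))
        (\<lambda>g \<omega>. case g of 0 \<Rightarrow> restrict (f \<omega>) {..<K}
                      | Suc 0 \<Rightarrow> restrict (u \<omega>) {j}
                      | _ \<Rightarrow> restrict (u \<omega>) ({..<p} - {j}))
        {0, 1, 2::nat}"
    and c_pos: "0 < c"
    and sigma_low: "\<And>j. j < p \<Longrightarrow> sigma2 M u j \<ge> c"
    and p_K: "p > K + 1"
begin

lemma fL2: "k < K \<Longrightarrow> L2 M (\<lambda>\<omega>. f \<omega> k)" unfolding L2_def using f_meas f_L2 by auto
lemma uL2: "i < p \<Longrightarrow> L2 M (\<lambda>\<omega>. u \<omega> i)" unfolding L2_def using u_meas u_L2 by auto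

definition mf :: "nat \<Rightarrow> real" where "mf k = (\<integral>\<omega>. f \<omega> k \<partial>M)"
definition fc :: "nat \<Rightarrow> 'a \<Rightarrow> real" where "fc k \<omega> = f \<omega> k - mf k"

lemma fcL2: "k < K \<Longrightarrow> L2 M (fc k)"
  unfolding fc_def using L2_diff[OF fL2 L2_const] by auto

lemma y_eq: "i < p \<Longrightarrow> (\<lambda>\<omega>. y \<omega> i) = (\<lambda>\<omega>. (\<Sum>k<K. f \<omega> k * A $$ (k, i)) + u \<omega> i)"
  using model by auto

lemma yL2: "i < p \<Longrightarrow> L2 M (\<lambda>\<omega>. y \<omega> i)"
proof -
  assume i: "i < p"
  have "L2 M (\<lambda>\<omega>. (\<Sum>k<K. f \<omega> k * A $$ (k, i)) + u \<omega> i)"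
    using i by (intro L2_add L2_sum L2_multc fL2 uL2) auto
  thus ?thesis using y_eq[OF i] by simp
qed

lemma my: "i < p \<Longrightarrow> (\<integral>\<omega>. y \<omega> i \<partial>M) = (\<Sum>k<K. mf k * A $$ (k, i))"
proof -
  assume i: "i < p"
  have "(\<integral>\<omega>. y \<omega> i \<partial>M) = (\<integral>\<omega>. (\<Sum>k<K. f \<omega> k * A $$ (k, i)) + u \<omega> i \<partial>M)"
    using y_eq[OF i] by simp
  also have "\<dots> = (\<integral>\<omega>. (\<Sum>k<K. f \<omega> k * A $$ (k, i)) \<partial>M) + (\<integral>\<omega>. u \<omega> i \<partial>M)"
    by (rule Bochner_Integration.integral_add) (use i in \<open>auto intro!: L2_int L2_sum L2_multc fL2 uL2\<close>)
  also have "(\<integral>\<omega>. (\<Sum>k<K. f \<omega> k * A $$ (k, i)) \<partial>M) = (\<Sum>k<K. \<integral>\<omega>. f \<omega> k * A $$ (k, i) \<partial>M)"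
    by (rule Bochner_Integration.integral_sum) (auto intro!: L2_int L2_multc fL2)
  finally show ?thesis using u_mean[OF i] by (simp add: mf_def)
qed

lemma yc: "i < p \<Longrightarrow> y \<omega> i - (\<integral>\<omega>. y \<omega> i \<partial>M) = (\<Sum>k<K. A $$ (k, i) * fc k \<omega>) + u \<omega> i"
proof -
  assume i: "i < p"
  have "(\<Sum>k<K. A $$ (k, i) * fc k \<omega>) = (\<Sum>k<K. f \<omega> k * A $$ (k, i) - mf k * A $$ (k, i))"
    unfolding fc_def by (rule sum.cong) (auto simp: algebra_simps)
  also have "\<dots> = (\<Sum>k<K. f \<omega> k * A $$ (k, i)) - (\<Sum>k<K. mf k * A $$ (k, i))"
    by (rule sum_subtractf)
  finally show ?thesis using model[OF i, of \<omega>] my[OF i] by simp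
qed

abbreviation Xind :: "nat \<Rightarrow> nat \<Rightarrow> 'a \<Rightarrow> nat \<Rightarrow> real" where
  "Xind j \<equiv> (\<lambda>g \<omega>. case g of 0 \<Rightarrow> restrict (f \<omega>) {..<K}
                      | Suc 0 \<Rightarrow> restrict (u \<omega>) {j}
                      | _ \<Rightarrow> restrict (u \<omega>) ({..<p} - {j}))"

lemma E_fu: "k < K \<Longrightarrow> l < p \<Longrightarrow> (\<integral>\<omega>. f \<omega> k * u \<omega> l \<partial>M) = 0"
proof -
  assume k: "k < K" and l: "l < p"
  have "(\<integral>\<omega>. Xind l 0 \<omega> k * Xind l 1 \<omega> l \<partial>M) = (\<integral>\<omega>. Xind l 0 \<omega> k \<partial>M) * (\<integral>\<omega>. Xind l 1 \<omega> l \<partial>M)"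
    by (rule indep_prod_integral[OF indep[OF l]]) (use k l in \<open>auto intro!: L2_int fL2 uL2\<close>)
  thus ?thesis using k l u_mean[OF l] by simp
qed

lemma E_fcu: "k < K \<Longrightarrow> l < p \<Longrightarrow> (\<integral>\<omega>. fc k \<omega> * u \<omega> l \<partial>M) = 0"
proof -
  assume k: "k < K" and l: "l < p"
  have "(\<integral>\<omega>. fc k \<omega> * u \<omega> l \<partial>M) = (\<integral>\<omega>. f \<omega> k * u \<omega> l - mf k * u \<omega> l \<partial>M)"
    unfolding fc_def by (simp add: algebra_simps)
  also have "\<dots> = (\<integral>\<omega>. f \<omega> k * u \<omega> l \<partial>M) - (\<integral>\<omega>. mf k * u \<omega> l \<partial>M)"
    by (rule Bochner_Integration.integral_diff) (use L2_mult_int[OF fL2[OF k] uL2[OF l]] L2_int[OF uL2[OF l]] in auto)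
  finally show ?thesis using E_fu[OF k l] u_mean[OF l] by simp
qed

lemma E_uu: "i < p \<Longrightarrow> l < p \<Longrightarrow> i \<noteq> l \<Longrightarrow> (\<integral>\<omega>. u \<omega> i * u \<omega> l \<partial>M) = 0"
proof -
  assume i: "i < p" and l: "l < p" and il: "i \<noteq> l"
  have "(\<integral>\<omega>. Xind i 1 \<omega> i * Xind i 2 \<omega> l \<partial>M) = (\<integral>\<omega>. Xind i 1 \<omega> i \<partial>M) * (\<integral>\<omega>. Xind i 2 \<omega> l \<partial>M)"
    by (rule indep_prod_integral[OF indep[OF i]]) (use i l il in \<open>auto intro!: L2_int uL2 simp: numeral_2_eq_2\<close>)
  thus ?thesis using i l il u_mean[OF i] by (simp add: numeral_2_eq_2)
qed

lemma cov_u: "i < p \<Longrightarrow> l < p \<Longrightarrow> cov M (\<lambda>\<omega>. u \<omega> i) (\<lambda>\<omega>. u \<omega> l) = (if i = l then sigma2 M u i else 0)"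
  using E_uu[of i l] u_mean unfolding cov_def sigma2_def by auto

lemma cov_f: "cov M (\<lambda>\<omega>. f \<omega> k) (\<lambda>\<omega>. f \<omega> k') = (\<integral>\<omega>. fc k \<omega> * fc k' \<omega> \<partial>M)"
  unfolding cov_def fc_def mf_def ..

definition F :: "nat \<Rightarrow> 'a \<Rightarrow> real" where "F m \<omega> = (\<Sum>k<K. A $$ (k, m) * fc k \<omega>)"

lemma FL2: "L2 M (F m)"
  unfolding F_def by (intro L2_sum L2_cmult fcL2) auto

lemma EFF: "(\<integral>\<omega>. F i \<omega> * F l \<omega> \<partial>M) = (\<Sum>k<K. \<Sum>k'<K. A $$ (k,i) * A $$ (k',l) * cov M (\<lambda>\<omega>. f \<omega> k) (\<lambda>\<omega>. f \<omega> k'))"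
  unfolding F_def cov_f by (rule L2_bilin) (auto intro: fcL2)

lemma cov_y: assumes i: "i < p" and l: "l < p"
  shows "cov M (\<lambda>\<omega>. y \<omega> i) (\<lambda>\<omega>. y \<omega> l) =
    (\<Sum>k<K. \<Sum>k'<K. A $$ (k,i) * A $$ (k',l) * cov M (\<lambda>\<omega>. f \<omega> k) (\<lambda>\<omega>. f \<omega> k'))
    + (if i = l then sigma2 M u i else 0)"
proof -
  have "cov M (\<lambda>\<omega>. y \<omega> i) (\<lambda>\<omega>. y \<omega> l) = (\<integral>\<omega>. (F i \<omega> + u \<omega> i) * (F l \<omega> + u \<omega> l) \<partial>M)"
    unfolding cov_def using yc i l by (simp add: F_def)
  also have "\<dots> = (\<integral>\<omega>. F i \<omega> * F l \<omega> + (F i \<omega> * u \<omega> l + (u \<omega> i * F l \<omega> + u \<omega> i * u \<omega> l)) \<partial>M)"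
    by (simp add: algebra_simps)
  also have "\<dots> = (\<integral>\<omega>. F i \<omega> * F l \<omega> \<partial>M) + ((\<integral>\<omega>. F i \<omega> * u \<omega> l \<partial>M) +
      ((\<integral>\<omega>. u \<omega> i * F l \<omega> \<partial>M) + (\<integral>\<omega>. u \<omega> i * u \<omega> l \<partial>M)))"
    using L2_mult_int[OF FL2 FL2] L2_mult_int[OF FL2 uL2[OF l]] L2_mult_int[OF uL2[OF i] FL2]
      L2_mult_int[OF uL2[OF i] uL2[OF l]]
    by (simp add: Bochner_Integration.integral_add)
  also have "(\<integral>\<omega>. F i \<omega> * F l \<omega> \<partial>M) = (\<Sum>k<K. \<Sum>k'<K. A $$ (k,i) * A $$ (k',l) * cov M (\<lambda>\<omega>. f \<omega> k) (\<lambda>\<omega>. f \<omega> k'))"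
    by (rule EFF)
  also have "(\<integral>\<omega>. F i \<omega> * u \<omega> l \<partial>M) = 0"
    unfolding F_def by (subst L2_lin1) (use fcL2 uL2[OF l] E_fcu[OF _ l] in auto)
  also have "(\<integral>\<omega>. u \<omega> i * F l \<omega> \<partial>M) = 0"
    unfolding F_def mult.commute[of "u _ i"] by (subst L2_lin1) (use fcL2 uL2[OF i] E_fcu[OF _ i] in auto)
  also have "(\<integral>\<omega>. u \<omega> i * u \<omega> l \<partial>M) = (if i = l then sigma2 M u i else 0)"
    using cov_u[OF i l] u_mean i l unfolding cov_def by simp
  finally show ?thesis by simp
qed

abbreviation Sy where "Sy \<equiv> cov_mat M y p"
abbreviation Sf where "Sf \<equiv> cov_mat M f K"

lemma Sy: "Sy \<in> carrier_mat p p" unfolding cov_mat_def by auto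
lemma Sf: "Sf \<in> carrier_mat K K" unfolding cov_mat_def by auto

lemma Sy_e: "l < p \<Longrightarrow> m < p \<Longrightarrow> Sy $$ (l,m) = cov M (\<lambda>\<omega>. y \<omega> l) (\<lambda>\<omega>. y \<omega> m)"
  unfolding cov_mat_def by simp
lemma Sf_e: "k < K \<Longrightarrow> k' < K \<Longrightarrow> Sf $$ (k,k') = cov M (\<lambda>\<omega>. f \<omega> k) (\<lambda>\<omega>. f \<omega> k')"
  unfolding cov_mat_def by simp

lemma cov_sym: "cov M X Y = cov M Y X" unfolding cov_def by (simp add: mult.commute)

lemma Sy_sym: "l < p \<Longrightarrow> m < p \<Longrightarrow> Sy $$ (l,m) = Sy $$ (m,l)"
  using Sy_e cov_sym by metis

lemma Sf_sym: "Sf\<^sup>T = Sf"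
proof (rule eq_matI)
  fix i j assume "i < dim_row Sf" "j < dim_col Sf"
  hence ij: "i < K" "j < K" using Sf by auto
  have "Sf\<^sup>T $$ (i, j) = Sf $$ (j, i)" using ij Sf by simp
  also have "\<dots> = Sf $$ (i, j)"
    using Sf_e[of i j] Sf_e[of j i] cov_sym[of "\<lambda>\<omega>. f \<omega> i" "\<lambda>\<omega>. f \<omega> j"] ij by simp
  finally show "Sf\<^sup>T $$ (i, j) = Sf $$ (i, j)" .
qed (use Sf in auto)

lemma Sf_psd: "psd_mat Sf"
  unfolding psd_mat_def
proof
  fix v :: "real vec" assume "v \<in> carrier_vec (dim_row Sf)"
  hence v: "v \<in> carrier_vec K" using Sf by auto
  have "v \<bullet> (Sf *\<^sub>v v) = (\<Sum>k<K. v $ k * (\<Sum>k'<K. Sf $$ (k,k') * v $ k'))"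
    using v Sf by (simp add: scalar_prod_def atLeast0LessThan)
  also have "\<dots> = (\<Sum>k<K. \<Sum>k'<K. v $ k * v $ k' * (\<integral>\<omega>. fc k \<omega> * fc k' \<omega> \<partial>M))"
  proof (intro sum.cong refl)
    fix k assume k: "k \<in> {..<K}"
    have "v $ k * (\<Sum>k'<K. Sf $$ (k,k') * v $ k') = (\<Sum>k'<K. v $ k * (Sf $$ (k,k') * v $ k'))"
      by (rule sum_distrib_left)
    also have "\<dots> = (\<Sum>k'<K. v $ k * v $ k' * (\<integral>\<omega>. fc k \<omega> * fc k' \<omega> \<partial>M))"
      by (intro sum.cong refl) (use k in \<open>simp add: Sf_e cov_f\<close>)
    finally show "v $ k * (\<Sum>k'<K. Sf $$ (k,k') * v $ k') = (\<Sum>k'<K. v $ k * v $ k' * (\<integral>\<omega>. fc k \<omega> * fc k' \<omega> \<partial>M))" .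
  qed
  also have "\<dots> = (\<integral>\<omega>. (\<Sum>k<K. v $ k * fc k \<omega>) * (\<Sum>k'<K. v $ k' * fc k' \<omega>) \<partial>M)"
    by (rule L2_bilin[symmetric]) (auto intro: fcL2)
  also have "\<dots> \<ge> 0" by (intro integral_nonneg_AE) auto
  finally show "v \<bullet> (Sf *\<^sub>v v) \<ge> 0" .
qed

definition ycen :: "nat \<Rightarrow> 'a \<Rightarrow> real" where "ycen l \<omega> = y \<omega> l - (\<integral>\<omega>. y \<omega> l \<partial>M)"

lemma ycenL2: "l < p \<Longrightarrow> L2 M (ycen l)"
  unfolding ycen_def using L2_diff[OF yL2 L2_const] by auto

lemma quad: "(\<integral>\<omega>. (\<Sum>l<p. w l * ycen l \<omega>)\<^sup>2 \<partial>M) = (\<Sum>l<p. \<Sum>m<p. w l * w m * Sy $$ (l,m))"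
proof -
  have "(\<integral>\<omega>. (\<Sum>l<p. w l * ycen l \<omega>)\<^sup>2 \<partial>M) = (\<integral>\<omega>. (\<Sum>l<p. w l * ycen l \<omega>) * (\<Sum>m<p. w m * ycen m \<omega>) \<partial>M)"
    by (simp add: power2_eq_square)
  also have "\<dots> = (\<Sum>l<p. \<Sum>m<p. w l * w m * (\<integral>\<omega>. ycen l \<omega> * ycen m \<omega> \<partial>M))"
    by (rule L2_bilin) (auto intro: ycenL2)
  also have "\<dots> = (\<Sum>l<p. \<Sum>m<p. w l * w m * Sy $$ (l,m))"
    by (intro sum.cong refl) (simp add: Sy_e cov_def ycen_def)
  finally show ?thesis .
qed

lemma quad_pos: assumes l0: "l0 < p" "w l0 \<noteq> 0"
  shows "(\<Sum>l<p. \<Sum>m<p. w l * w m * Sy $$ (l,m)) > 0"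
proof -
  define G where "G \<omega> = (\<Sum>l<p. w l * F l \<omega>)" for \<omega>
  have "(\<Sum>l<p. \<Sum>m<p. w l * w m * Sy $$ (l,m)) =
     (\<Sum>l<p. \<Sum>m<p. w l * w m * (\<integral>\<omega>. F l \<omega> * F m \<omega> \<partial>M)) +
     (\<Sum>l<p. \<Sum>m<p. w l * w m * (if l = m then sigma2 M u l else 0))"
  proof -
    have "(\<Sum>l<p. \<Sum>m<p. w l * w m * Sy $$ (l,m)) = (\<Sum>l<p. \<Sum>m<p. w l * w m * (\<integral>\<omega>. F l \<omega> * F m \<omega> \<partial>M) +
       w l * w m * (if l = m then sigma2 M u l else 0))"
      by (intro sum.cong refl) (simp add: Sy_e cov_y EFF distrib_left)
    also have "\<dots> = (\<Sum>l<p. \<Sum>m<p. w l * w m * (\<integral>\<omega>. F l \<omega> * F m \<omega> \<partial>M)) +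
     (\<Sum>l<p. \<Sum>m<p. w l * w m * (if l = m then sigma2 M u l else 0))"
      by (simp only: sum.distrib)
    finally show ?thesis .
  qed
  also have "(\<Sum>l<p. \<Sum>m<p. w l * w m * (\<integral>\<omega>. F l \<omega> * F m \<omega> \<partial>M)) = (\<integral>\<omega>. G \<omega> * G \<omega> \<partial>M)"
    unfolding G_def by (rule L2_bilin[symmetric]) (auto intro: FL2)
  also have "(\<Sum>l<p. \<Sum>m<p. w l * w m * (if l = m then sigma2 M u l else 0)) = (\<Sum>l<p. w l * w l * sigma2 M u l)"
  proof (intro sum.cong refl)
    fix l assume l: "l \<in> {..<p}"
    have "(\<Sum>m<p. w l * w m * (if l = m then sigma2 M u l else 0)) = (\<Sum>m<p. if m = l then w l * w l * sigma2 M u l else 0)"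
      by (rule sum.cong) auto
    also have "\<dots> = w l * w l * sigma2 M u l" using l by simp
    finally show "(\<Sum>m<p. w l * w m * (if l = m then sigma2 M u l else 0)) = w l * w l * sigma2 M u l" .
  qed
  finally have eq: "(\<Sum>l<p. \<Sum>m<p. w l * w m * Sy $$ (l,m)) = (\<integral>\<omega>. G \<omega> * G \<omega> \<partial>M) + (\<Sum>l<p. w l * w l * sigma2 M u l)" .
  have g: "(\<integral>\<omega>. G \<omega> * G \<omega> \<partial>M) \<ge> 0" by (intro integral_nonneg_AE) auto
  have "(\<Sum>l<p. w l * w l * sigma2 M u l) > 0"
  proof (rule sum_pos2[of _ l0])
    have "0 < w l0 * w l0" using l0(2) by (auto simp: zero_less_mult_iff linorder_neq_iff)
    moreover have "0 < sigma2 M u l0" using l0 sigma_low[of l0] c_pos by linarith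
    ultimately show "0 < w l0 * w l0 * sigma2 M u l0" by (rule mult_pos_pos)
    show "0 \<le> w i * w i * sigma2 M u i" if "i \<in> {..<p}" for i
    proof -
      have "0 \<le> sigma2 M u i" using that sigma_low[of i] c_pos by auto
      with zero_le_square[of "w i"] show ?thesis by (rule mult_nonneg_nonneg)
    qed
  qed (use l0 in auto)
  thus ?thesis using eq g by linarith
qed

end

lemma ins_lt: "j < p \<Longrightarrow> r < p - 1 \<Longrightarrow> insert_index j r < p"
  unfolding insert_index_def by auto

lemma ins_inj: "insert_index j r = insert_index j s \<Longrightarrow> r = s"
  unfolding insert_index_def by (auto split: if_splits)

lemma del_ins: "delete_index j (insert_index j i) = i"
  unfolding insert_index_def Defs.delete_index_def by auto

lemma ins_del: "l \<noteq> j \<Longrightarrow> insert_index j (delete_index j l) = l"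
  unfolding insert_index_def Defs.delete_index_def by auto

lemma del_lt: "j < p \<Longrightarrow> l < p \<Longrightarrow> l \<noteq> j \<Longrightarrow> delete_index j l < p - 1"
  unfolding Defs.delete_index_def by auto

lemma sum_split:
  fixes g :: "nat \<Rightarrow> real"
  assumes j: "j < p"
  shows "(\<Sum>l<p. g l) = g j + (\<Sum>i<p - 1. g (insert_index j i))"
proof -
  have "{..<p} = insert j ({..<p} - {j})" using j by auto
  hence "(\<Sum>l<p. g l) = g j + (\<Sum>l\<in>{..<p} - {j}. g l)" by (intro sum.remove) (use j in auto)
  also have "{..<p} - {j} = insert_index j ` {..<p - 1}"
    using insert_index_image[of j "p - 1"] j by (simp add: atLeast0LessThan)
  also have "(\<Sum>l\<in>insert_index j ` {..<p - 1}. g l) = (\<Sum>i<p - 1. g (insert_index j i))"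
    by (rule sum.reindex_cong[OF insert_index_inj_on refl refl])
  finally show ?thesis .
qed

lemma nonzero_entry: fixes v :: "real vec" assumes v: "v \<in> carrier_vec n" and nz: "v \<noteq> 0\<^sub>v n" shows "\<exists>l<n. v $ l \<noteq> (0::real)"
proof (rule ccontr)
  assume "\<not> ?thesis"
  hence "v = 0\<^sub>v n" by (intro eq_vecI) (use v in auto)
  thus False using nz by simp
qed

locale fmodj = fmod +
  fixes j :: nat
  assumes j: "j < p"
begin

abbreviation q where "q \<equiv> p - 1"
abbreviation Am where "Am \<equiv> A_minus A p j"
abbreviation S where "S \<equiv> mat_sqrt Sf"
abbreviation Ab where "Ab \<equiv> Abar M f A p j"
abbreviation ab where "ab \<equiv> abar M f A j"
abbreviation D where "D \<equiv> Sigma_U_minus M u p j"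
abbreviation G where "G \<equiv> Gbar M f u A p j"
abbreviation al where "al \<equiv> alpha_formula M f u A p j"
abbreviation t2 where "t2 \<equiv> tau2 M f u A p j"
abbreviation a where "a \<equiv> a_col A j"
abbreviation Di where "Di \<equiv> mat_inv D"
abbreviation Gi where "Gi \<equiv> mat_inv G"

lemma dimA: "dim_row A = K" using A_dim by auto

lemma Am: "Am \<in> carrier_mat q K" unfolding A_minus_def dimA by auto
lemma Am_e: "r < q \<Longrightarrow> k < K \<Longrightarrow> Am $$ (r,k) = A $$ (k, insert_index j r)"
  unfolding A_minus_def dimA by auto

lemma S: "S \<in> carrier_mat K K" "S\<^sup>T = S" "S * S = Sf"
  using mat_sqrt_props[OF Sf Sf_sym Sf_psd] by auto

lemma a: "a \<in> carrier_vec K" unfolding a_col_def dimA by auto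
lemma a_e: "k < K \<Longrightarrow> a $ k = A $$ (k, j)" unfolding a_col_def dimA by auto

lemma Ab_def': "Ab = Am * S" unfolding Abar_def dimA ..
lemma Ab: "Ab \<in> carrier_mat q K" unfolding Ab_def' using Am S by auto
lemma ab_def': "ab = S *\<^sub>v a" unfolding abar_def dimA ..
lemma ab: "ab \<in> carrier_vec K" unfolding ab_def' using S a by auto

lemma D: "D \<in> carrier_mat q q" unfolding Sigma_U_minus_def cov_mat_def by auto
lemma D_e: "r < q \<Longrightarrow> s < q \<Longrightarrow> D $$ (r,s) = (if r = s then sigma2 M u (insert_index j r) else 0)"
proof -
  assume r: "r < q" and s: "s < q"
  have "D $$ (r,s) = cov M (\<lambda>\<omega>. u \<omega> (insert_index j r)) (\<lambda>\<omega>. u \<omega> (insert_index j s))"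
    unfolding Sigma_U_minus_def cov_mat_def using r s by simp
  also have "\<dots> = (if insert_index j r = insert_index j s then sigma2 M u (insert_index j r) else 0)"
    by (rule cov_u[OF ins_lt[OF j r] ins_lt[OF j s]])
  also have "(insert_index j r = insert_index j s) = (r = s)" using ins_inj by blast
  finally show ?thesis .
qed
lemma D_diag: "diagonal_mat D" unfolding diagonal_mat_def
proof (intro allI impI)
  fix r s assume "r < dim_row D" "s < dim_col D" "r \<noteq> s"
  thus "D $$ (r,s) = 0" using D D_e[of r s] by simp
qed
lemma D_pos: "r < q \<Longrightarrow> D $$ (r,r) > 0"
proof -
  assume r: "r < q"
  have "D $$ (r,r) = sigma2 M u (insert_index j r)" using D_e[OF r r] by simp
  thus ?thesis using sigma_low[OF ins_lt[OF j r]] c_pos by linarith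
qed

lemma D_nonsing: assumes v: "v \<in> carrier_vec q" and Dv: "D *\<^sub>v v = 0\<^sub>v q" shows "v = 0\<^sub>v q"
proof (rule eq_vecI)
  fix r assume "r < dim_vec (0\<^sub>v q :: real vec)"
  hence r: "r < q" by simp
  have "D $$ (r,r) * v $ r = 0" using diag_mult_vec[OF D D_diag v r] Dv r by simp
  thus "v $ r = 0\<^sub>v q $ r" using D_pos[OF r] r by simp
qed (use v in auto)

lemma Di: "Di \<in> carrier_mat q q" "D * Di = 1\<^sub>m q" "Di * D = 1\<^sub>m q"
  using mat_inv_props[OF D D_nonsing] by auto

lemma Di_psd: assumes z: "z \<in> carrier_vec q" shows "z \<bullet> (Di *\<^sub>v z) \<ge> 0"
proof -
  define x where "x = Di *\<^sub>v z"
  have x: "x \<in> carrier_vec q" unfolding x_def using Di z by auto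
  have "(D * Di) *\<^sub>v z = D *\<^sub>v x" unfolding x_def by (rule assoc_mult_mat_vec) (use D Di z in auto)
  hence "D *\<^sub>v x = z" using Di z by simp
  hence "z \<bullet> (Di *\<^sub>v z) = (D *\<^sub>v x) \<bullet> x" unfolding x_def by simp
  also have "\<dots> = (\<Sum>r\<in>{0..<q}. D $$ (r,r) * x $ r * x $ r)"
    using x D diag_mult_vec[OF D D_diag x] by (simp add: scalar_prod_def)
  also have "\<dots> \<ge> 0"
  proof (intro sum_nonneg)
    fix r assume "r \<in> {0..<q}"
    hence "D $$ (r,r) \<ge> 0" using D_pos by (simp add: less_imp_le)
    with zero_le_square[of "x $ r"] have "0 \<le> D $$ (r,r) * (x $ r * x $ r)" by (simp add: mult_nonneg_nonneg)
    thus "0 \<le> D $$ (r,r) * x $ r * x $ r" by (simp add: mult.assoc)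
  qed
  finally show ?thesis .
qed

lemma G_def': "G = 1\<^sub>m K + Ab\<^sup>T * Di * Ab" unfolding Gbar_def dimA ..
lemma G: "G \<in> carrier_mat K K" unfolding G_def' using Ab Di by auto

lemma G_nonsing: assumes v: "v \<in> carrier_vec K" and Gv: "G *\<^sub>v v = 0\<^sub>v K" shows "v = 0\<^sub>v K"
proof (rule ccontr)
  assume nz: "v \<noteq> 0\<^sub>v K"
  define z where "z = Ab *\<^sub>v v"
  have z: "z \<in> carrier_vec q" unfolding z_def using Ab v by auto
  have "G *\<^sub>v v = v + Ab\<^sup>T *\<^sub>v (Di *\<^sub>v z)" unfolding G_def' z_def using Ab Di v
    by (simp add: add_mult_distrib_mat_vec[of _ K K] assoc_mult_mat_vec[of _ K q _ K] assoc_mult_mat_vec[of _ q q _ K])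
  hence "v \<bullet> (G *\<^sub>v v) = v \<bullet> v + v \<bullet> (Ab\<^sup>T *\<^sub>v (Di *\<^sub>v z))"
    using v Ab Di z by (simp add: scalar_prod_add_distrib[of _ K])
  also have "v \<bullet> (Ab\<^sup>T *\<^sub>v (Di *\<^sub>v z)) = z \<bullet> (Di *\<^sub>v z)"
    using transpose_vec_mult_scalar[OF Ab v, of "Di *\<^sub>v z"] Ab Di v z
    by (simp add: comm_scalar_prod[of _ K] comm_scalar_prod[of _ q] z_def[symmetric])
  finally have "v \<bullet> (G *\<^sub>v v) = v \<bullet> v + z \<bullet> (Di *\<^sub>v z)" .
  moreover have "v \<bullet> (G *\<^sub>v v) = 0" using Gv v by simp
  ultimately have "v \<bullet> v \<le> 0" using Di_psd[OF z] by linarith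
  thus False using real_vec_self_pos[OF v nz] by simp
qed

lemma Gi: "Gi \<in> carrier_mat K K" "G * Gi = 1\<^sub>m K" "Gi * G = 1\<^sub>m K"
  using mat_inv_props[OF G G_nonsing] by auto

lemma al_def': "al = Di *\<^sub>v (Ab *\<^sub>v (Gi *\<^sub>v ab))" unfolding alpha_formula_def ..
lemma al: "al \<in> carrier_vec q" unfolding al_def' using Di Ab Gi ab by auto

lemma woodbury: "(Ab * Ab\<^sup>T + D) *\<^sub>v al = Ab *\<^sub>v ab"
proof -
  define g where "g = Gi *\<^sub>v ab"
  have g: "g \<in> carrier_vec K" unfolding g_def using Gi ab by auto
  define H where "H = Ab\<^sup>T * Di * Ab"
  have H: "H \<in> carrier_mat K K" unfolding H_def using Ab Di by auto
  have "(G * Gi) *\<^sub>v ab = G *\<^sub>v g" unfolding g_def by (rule assoc_mult_mat_vec) (use G Gi ab in auto)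
  hence Gg: "G *\<^sub>v g = ab" using Gi ab by simp
  have "G *\<^sub>v g = g + H *\<^sub>v g" unfolding G_def' H_def[symmetric] using H g
    by (simp add: add_mult_distrib_mat_vec[of _ K K])
  hence Hg: "H *\<^sub>v g + g = ab" using Gg H g by (simp add: comm_add_vec[of _ K])
  have "(D * Di) *\<^sub>v (Ab *\<^sub>v g) = D *\<^sub>v al" unfolding al_def' g_def[symmetric]
    by (rule assoc_mult_mat_vec) (use D Di Ab g in auto)
  hence Dal: "D *\<^sub>v al = Ab *\<^sub>v g" using Di Ab g by simp
  have Abal: "Ab\<^sup>T *\<^sub>v al = H *\<^sub>v g" unfolding al_def' g_def[symmetric] H_def using Di Ab g
    by (simp add: assoc_mult_mat_vec[of _ K q _ K] assoc_mult_mat_vec[of _ K q _ q])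
  have "(Ab * Ab\<^sup>T + D) *\<^sub>v al = Ab *\<^sub>v (Ab\<^sup>T *\<^sub>v al) + D *\<^sub>v al" using Ab D al
    by (simp add: add_mult_distrib_mat_vec[of _ q q] assoc_mult_mat_vec[of _ q K _ q])
  also have "\<dots> = Ab *\<^sub>v (H *\<^sub>v g + g)" unfolding Abal Dal using Ab H g
    by (simp add: mult_add_distrib_mat_vec[of _ q K])
  also have "\<dots> = Ab *\<^sub>v ab" unfolding Hg ..
  finally show ?thesis .
qed

lemma AbAbT: "Ab * Ab\<^sup>T = Am * Sf * Am\<^sup>T"
proof -
  have t: "(Am * S)\<^sup>T = S\<^sup>T * Am\<^sup>T" by (rule transpose_mult) (use Am S in auto)
  have "Ab * Ab\<^sup>T = Am * S * (S * Am\<^sup>T)" unfolding Ab_def' t S(2) ..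
  also have "\<dots> = Am * (S * (S * Am\<^sup>T))" by (rule assoc_mult_mat) (use Am S in auto)
  also have "S * (S * Am\<^sup>T) = S * S * Am\<^sup>T" by (rule assoc_mult_mat[symmetric]) (use Am S in auto)
  also have "Am * (S * S * Am\<^sup>T) = Am * (S * S) * Am\<^sup>T" by (rule assoc_mult_mat[symmetric]) (use Am S Sf in auto)
  finally show ?thesis unfolding S(3) .
qed

lemma rowAm: "r < q \<Longrightarrow> row Am r \<in> carrier_vec K" using Am by auto
lemma rowAm_e: "r < q \<Longrightarrow> k < K \<Longrightarrow> row Am r $ k = A $$ (k, insert_index j r)"
  using Am Am_e by auto

lemma Sm_e: assumes r: "r < q" and s: "s < q"
  shows "(Ab * Ab\<^sup>T + D) $$ (r,s) = Sy $$ (insert_index j r, insert_index j s)"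
proof -
  have "(Ab * Ab\<^sup>T + D) $$ (r,s) = (Am * Sf * Am\<^sup>T) $$ (r,s) + D $$ (r,s)"
    unfolding AbAbT using Am Sf D r s by simp
  also have "(Am * Sf * Am\<^sup>T) $$ (r,s) = row Am r \<bullet> (Sf *\<^sub>v row Am s)"
    by (rule sandwich_entry[OF Am Sf r s])
  also have "\<dots> = (\<Sum>k<K. \<Sum>k'<K. row Am r $ k * row Am s $ k' * Sf $$ (k,k'))"
    by (rule bil_sum[OF Sf rowAm[OF r] rowAm[OF s]])
  also have "\<dots> = (\<Sum>k<K. \<Sum>k'<K. A $$ (k, insert_index j r) * A $$ (k', insert_index j s) *
      cov M (\<lambda>\<omega>. f \<omega> k) (\<lambda>\<omega>. f \<omega> k'))"
    using r s by (intro sum.cong refl) (simp add: rowAm_e Sf_e)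
  finally have e1: "(Ab * Ab\<^sup>T + D) $$ (r,s) = (\<Sum>k<K. \<Sum>k'<K. A $$ (k, insert_index j r) * A $$ (k', insert_index j s) *
      cov M (\<lambda>\<omega>. f \<omega> k) (\<lambda>\<omega>. f \<omega> k')) + D $$ (r,s)" .
  have ee: "(insert_index j r = insert_index j s) = (r = s)" using ins_inj by blast
  have "Sy $$ (insert_index j r, insert_index j s) = (\<Sum>k<K. \<Sum>k'<K. A $$ (k, insert_index j r) * A $$ (k', insert_index j s) *
      cov M (\<lambda>\<omega>. f \<omega> k) (\<lambda>\<omega>. f \<omega> k')) + (if insert_index j r = insert_index j s then sigma2 M u (insert_index j r) else 0)"
    unfolding Sy_e[OF ins_lt[OF j r] ins_lt[OF j s]] by (rule cov_y[OF ins_lt[OF j r] ins_lt[OF j s]])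
  thus ?thesis unfolding e1 D_e[OF r s] ee by simp
qed

lemma Sv_e: assumes r: "r < q" shows "(Ab *\<^sub>v ab) $ r = Sy $$ (insert_index j r, j)"
proof -
  have "Ab *\<^sub>v ab = Am *\<^sub>v ((S * S) *\<^sub>v a)" unfolding Ab_def' ab_def' using Am S(1) a
    by (simp add: assoc_mult_mat_vec[of _ q K _ K] assoc_mult_mat_vec[of _ K K _ K])
  hence "(Ab *\<^sub>v ab) $ r = row Am r \<bullet> (Sf *\<^sub>v a)" unfolding S(3) using Am r by simp
  also have "\<dots> = (\<Sum>k<K. \<Sum>k'<K. row Am r $ k * a $ k' * Sf $$ (k,k'))"
    by (rule bil_sum[OF Sf rowAm[OF r] a])
  also have "\<dots> = (\<Sum>k<K. \<Sum>k'<K. A $$ (k, insert_index j r) * A $$ (k', j) *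
      cov M (\<lambda>\<omega>. f \<omega> k) (\<lambda>\<omega>. f \<omega> k'))"
    using r by (intro sum.cong refl) (simp add: rowAm_e Sf_e a_e)
  moreover have "Sy $$ (insert_index j r, j) = (\<Sum>k<K. \<Sum>k'<K. A $$ (k, insert_index j r) * A $$ (k', j) *
      cov M (\<lambda>\<omega>. f \<omega> k) (\<lambda>\<omega>. f \<omega> k')) + (if insert_index j r = j then sigma2 M u (insert_index j r) else 0)"
    unfolding Sy_e[OF ins_lt[OF j r] j] by (rule cov_y[OF ins_lt[OF j r] j])
  ultimately show ?thesis using insert_index_exclude[of j r] by simp
qed

lemma abab: "ab \<bullet> ab = Sy $$ (j,j) - sigma2 M u j"
proof -
  have "(S\<^sup>T *\<^sub>v (S *\<^sub>v a)) \<bullet> a = (S *\<^sub>v a) \<bullet> (S *\<^sub>v a)"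
    by (rule transpose_vec_mult_scalar) (use S a in auto)
  moreover have "S\<^sup>T *\<^sub>v (S *\<^sub>v a) = Sf *\<^sub>v a"
  proof -
    have "(S * S) *\<^sub>v a = S *\<^sub>v (S *\<^sub>v a)" by (rule assoc_mult_mat_vec) (use S a in auto)
    thus ?thesis unfolding S(2) S(3) by simp
  qed
  ultimately have "ab \<bullet> ab = a \<bullet> (Sf *\<^sub>v a)" unfolding ab_def' using a Sf
    by (simp add: comm_scalar_prod[of _ K])
  also have "\<dots> = (\<Sum>k<K. \<Sum>k'<K. a $ k * a $ k' * Sf $$ (k,k'))" by (rule bil_sum[OF Sf a a])
  also have "\<dots> = (\<Sum>k<K. \<Sum>k'<K. A $$ (k, j) * A $$ (k', j) * cov M (\<lambda>\<omega>. f \<omega> k) (\<lambda>\<omega>. f \<omega> k'))"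
    by (intro sum.cong refl) (simp add: Sf_e a_e)
  moreover have "Sy $$ (j, j) = (\<Sum>k<K. \<Sum>k'<K. A $$ (k, j) * A $$ (k', j) *
      cov M (\<lambda>\<omega>. f \<omega> k) (\<lambda>\<omega>. f \<omega> k')) + (if j = j then sigma2 M u j else 0)"
    unfolding Sy_e[OF j j] by (rule cov_y[OF j j])
  ultimately show ?thesis by simp
qed

lemma t2_eq: "t2 = Sy $$ (j,j) - (\<Sum>r<q. Sy $$ (j, insert_index j r) * al $ r)"
proof -
  have "ab \<bullet> (Ab\<^sup>T *\<^sub>v al) = (Ab\<^sup>T *\<^sub>v al) \<bullet> ab" by (rule comm_scalar_prod[of _ K]) (use Ab al ab in auto)
  also have "\<dots> = al \<bullet> (Ab *\<^sub>v ab)" by (rule transpose_vec_mult_scalar[OF Ab ab al])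
  also have "\<dots> = (\<Sum>r\<in>{0..<q}. al $ r * (Ab *\<^sub>v ab) $ r)" using al Ab by (simp add: scalar_prod_def)
  also have "\<dots> = (\<Sum>r<q. Sy $$ (j, insert_index j r) * al $ r)" unfolding atLeast0LessThan
  proof (rule sum.cong[OF refl])
    fix r assume "r \<in> {..<q}"
    hence r: "r < q" by simp
    have "(Ab *\<^sub>v ab) $ r = Sy $$ (j, insert_index j r)" using Sv_e[OF r] Sy_sym[OF ins_lt[OF j r] j] by simp
    thus "al $ r * (Ab *\<^sub>v ab) $ r = Sy $$ (j, insert_index j r) * al $ r" by simp
  qed
  finally have X: "ab \<bullet> (Ab\<^sup>T *\<^sub>v al) = (\<Sum>r<q. Sy $$ (j, insert_index j r) * al $ r)" .
  have T: "t2 = (ab \<bullet> ab + sigma2 M u j) - ab \<bullet> (Ab\<^sup>T *\<^sub>v al)" unfolding tau2_def ..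
  show ?thesis using T X abab by linarith
qed

definition wv :: "nat \<Rightarrow> real" where "wv l = (if l = j then 1 else - al $ delete_index j l)"

lemma wv_ins: "wv (insert_index j r) = - al $ r"
  unfolding wv_def using insert_index_exclude[of j r] del_ins by simp

lemma mv_entry: assumes X: "X \<in> carrier_mat n n" and v: "v \<in> carrier_vec n" and r: "r < n"
  shows "(X *\<^sub>v v) $ r = (\<Sum>l<n. X $$ (r,l) * v $ l)"
proof -
  have "(X *\<^sub>v v) $ r = row X r \<bullet> v" using X r by simp
  also have "\<dots> = (\<Sum>l\<in>{0..<n}. row X r $ l * v $ l)" unfolding scalar_prod_def using v by simp
  also have "\<dots> = (\<Sum>l<n. X $$ (r,l) * v $ l)" unfolding atLeast0LessThan
    by (rule sum.cong[OF refl]) (use X r in simp)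
  finally show ?thesis .
qed

lemma row_prop: assumes m: "m < p"
  shows "(\<Sum>l<p. Sy $$ (m,l) * wv l) = (if m = j then t2 else 0)"
proof -
  have "(\<Sum>l<p. Sy $$ (m,l) * wv l) = Sy $$ (m,j) * wv j + (\<Sum>r<q. Sy $$ (m, insert_index j r) * wv (insert_index j r))"
    by (rule sum_split[OF j])
  also have "\<dots> = Sy $$ (m,j) - (\<Sum>r<q. Sy $$ (m, insert_index j r) * al $ r)"
    unfolding wv_ins by (simp add: wv_def sum_negf)
  also have "\<dots> = (if m = j then t2 else 0)"
  proof (cases "m = j")
    case True thus ?thesis using t2_eq by simp
  next
    case False
    define r0 where "r0 = delete_index j m"
    have r0: "r0 < q" unfolding r0_def using del_lt[OF j m False] .
    have mr: "m = insert_index j r0" unfolding r0_def using ins_del[OF False] by simp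
    have "Sy $$ (m, j) = (Ab *\<^sub>v ab) $ r0" unfolding mr using Sv_e[OF r0] ..
    also have "\<dots> = ((Ab * Ab\<^sup>T + D) *\<^sub>v al) $ r0" unfolding woodbury ..
    also have "\<dots> = (\<Sum>r<q. (Ab * Ab\<^sup>T + D) $$ (r0, r) * al $ r)"
      by (rule mv_entry[OF _ al r0]) (use Ab D in auto)
    also have "\<dots> = (\<Sum>r<q. Sy $$ (m, insert_index j r) * al $ r)"
    proof (rule sum.cong[OF refl])
      fix r assume "r \<in> {..<q}"
      hence r: "r < q" by simp
      show "(Ab * Ab\<^sup>T + D) $$ (r0, r) * al $ r = Sy $$ (m, insert_index j r) * al $ r"
        unfolding Sm_e[OF r0 r] mr ..
    qed
    finally show ?thesis using False by simp
  qed
  finally show ?thesis .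
qed

lemma Sy_nonsing: assumes v: "v \<in> carrier_vec p" and Sv: "Sy *\<^sub>v v = 0\<^sub>v p" shows "v = 0\<^sub>v p"
proof (rule ccontr)
  assume "v \<noteq> 0\<^sub>v p"
  then obtain l0 where l0: "l0 < p" "v $ l0 \<noteq> 0" using nonzero_entry[OF v] by blast
  have pos: "(\<Sum>l<p. \<Sum>m<p. v $ l * v $ m * Sy $$ (l,m)) > 0" by (rule quad_pos[of l0 "\<lambda>l. v $ l", OF l0])
  have vv: "vec p (\<lambda>l. v $ l) = v" by (rule eq_vecI) (use v in auto)
  have "v \<bullet> (Sy *\<^sub>v v) = (\<Sum>l<p. \<Sum>m<p. v $ l * v $ m * Sy $$ (l,m))"
    using quad_vec[OF Sy, of "\<lambda>l. v $ l"] unfolding vv .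
  moreover have "v \<bullet> (Sy *\<^sub>v v) = 0" using Sv v by simp
  ultimately show False using pos by simp
qed

abbreviation Th where "Th \<equiv> mat_inv Sy"

lemma Th: "Th \<in> carrier_mat p p" "Sy * Th = 1\<^sub>m p" "Th * Sy = 1\<^sub>m p" "invertible_mat Sy"
  using mat_inv_props[OF Sy Sy_nonsing] by auto

lemma Sy_wv: "Sy *\<^sub>v vec p wv = vec p (\<lambda>m. if m = j then t2 else 0)"
proof (rule eq_vecI)
  fix m assume "m < dim_vec (vec p (\<lambda>m. if m = j then t2 else 0))"
  hence m: "m < p" by simp
  have "(Sy *\<^sub>v vec p wv) $ m = row Sy m \<bullet> vec p wv" using Sy m by simp
  also have "\<dots> = (\<Sum>l\<in>{0..<p}. row Sy m $ l * vec p wv $ l)" unfolding scalar_prod_def by simp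
  also have "\<dots> = (\<Sum>l<p. Sy $$ (m,l) * wv l)" unfolding atLeast0LessThan
    by (rule sum.cong[OF refl]) (use Sy m in simp)
  also have "\<dots> = vec p (\<lambda>m. if m = j then t2 else 0) $ m" using row_prop[OF m] m by simp
  finally show "(Sy *\<^sub>v vec p wv) $ m = vec p (\<lambda>m. if m = j then t2 else 0) $ m" .
next
  show "dim_vec (Sy *\<^sub>v vec p wv) = dim_vec (vec p (\<lambda>m. if m = j then t2 else 0))" using Sy by simp
qed

lemma t2_nz: "t2 \<noteq> 0"
proof
  assume t0: "t2 = 0"
  have S0: "Sy *\<^sub>v vec p wv = 0\<^sub>v p"
  proof (rule eq_vecI)
    fix m assume "m < dim_vec (0\<^sub>v p :: real vec)"
    hence m: "m < p" by simp
    show "(Sy *\<^sub>v vec p wv) $ m = 0\<^sub>v p $ m" unfolding Sy_wv using t0 m by simp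
  qed (simp add: Sy_wv)
  have "vec p wv = 0\<^sub>v p" by (rule Sy_nonsing[OF _ S0]) simp
  hence "vec p wv $ j = 0\<^sub>v p $ j" by simp
  hence "wv j = 0" using j by simp
  thus False by (simp add: wv_def)
qed

lemma SyT: "Sy\<^sup>T = Sy"
proof (rule eq_matI)
  fix i k assume "i < dim_row Sy" "k < dim_col Sy"
  hence ik: "i < p" "k < p" using Sy by auto
  show "Sy\<^sup>T $$ (i, k) = Sy $$ (i, k)" using ik Sy Sy_sym[OF ik(2) ik(1)] by simp
qed (use Sy in auto)

lemma Th_row: assumes n: "n < p" shows "t2 * Th $$ (j,n) = wv n"
proof -
  have "(Sy * Th)\<^sup>T = Th\<^sup>T * Sy\<^sup>T" by (rule transpose_mult) (use Sy Th in auto)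
  hence ThS: "Th\<^sup>T * Sy = 1\<^sub>m p" unfolding SyT Th(2) by simp
  have "(Th\<^sup>T * Sy) *\<^sub>v vec p wv = Th\<^sup>T *\<^sub>v (Sy *\<^sub>v vec p wv)"
    by (rule assoc_mult_mat_vec) (use Sy Th in auto)
  hence "Th\<^sup>T *\<^sub>v vec p (\<lambda>m. if m = j then t2 else 0) = vec p wv" unfolding ThS Sy_wv by simp
  hence "(Th\<^sup>T *\<^sub>v vec p (\<lambda>m. if m = j then t2 else 0)) $ n = wv n" using n by simp
  moreover have "(Th\<^sup>T *\<^sub>v vec p (\<lambda>m. if m = j then t2 else 0)) $ n = row Th\<^sup>T n \<bullet> vec p (\<lambda>m. if m = j then t2 else 0)"
    using Th n by simp
  moreover have "\<dots> = (\<Sum>m\<in>{0..<p}. row Th\<^sup>T n $ m * vec p (\<lambda>m. if m = j then t2 else 0) $ m)"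
    unfolding scalar_prod_def by simp
  moreover have "\<dots> = (\<Sum>m\<in>{0..<p}. if m = j then Th $$ (j,n) * t2 else 0)"
    by (rule sum.cong[OF refl]) (use Th n in simp)
  moreover have "\<dots> = Th $$ (j,n) * t2" using j by simp
  ultimately show ?thesis by simp
qed

lemma Sy_pd: assumes d: "d \<in> carrier_vec p" and nz: "d \<noteq> 0\<^sub>v p" shows "d \<bullet> (Sy *\<^sub>v d) > 0"
proof -
  obtain l0 where l0: "l0 < p" "d $ l0 \<noteq> 0" using nonzero_entry[OF d nz] by blast
  have pos: "(\<Sum>l<p. \<Sum>m<p. d $ l * d $ m * Sy $$ (l,m)) > 0" by (rule quad_pos[of l0 "\<lambda>l. d $ l", OF l0])
  have vv: "vec p (\<lambda>l. d $ l) = d" by (rule eq_vecI) (use d in auto)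
  have "d \<bullet> (Sy *\<^sub>v d) = (\<Sum>l<p. \<Sum>m<p. d $ l * d $ m * Sy $$ (l,m))"
    using quad_vec[OF Sy, of "\<lambda>l. d $ l"] unfolding vv .
  thus ?thesis using pos by simp
qed

lemma Sy_psd: assumes d: "d \<in> carrier_vec p" shows "d \<bullet> (Sy *\<^sub>v d) \<ge> 0"
proof (cases "d = 0\<^sub>v p")
  case True thus ?thesis using Sy by simp
next
  case False thus ?thesis using Sy_pd[OF d] by (simp add: less_imp_le)
qed

definition wb :: "real vec \<Rightarrow> real vec" where
  "wb \<beta> = vec p (\<lambda>l. if l = j then 1 else - \<beta> $ delete_index j l)"

lemma wb: "wb \<beta> \<in> carrier_vec p" unfolding wb_def by simp
lemma wb_al: "wb al = vec p wv" unfolding wb_def wv_def ..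

lemma J_eq: "(\<integral>\<omega>. ((y \<omega> j - (\<integral>\<omega>'. y \<omega>' j \<partial>M))
               - (\<Sum>i<p - 1. (y \<omega> (insert_index j i) - (\<integral>\<omega>'. y \<omega>' (insert_index j i) \<partial>M)) * \<beta> $ i))\<^sup>2 \<partial>M)
   = wb \<beta> \<bullet> (Sy *\<^sub>v wb \<beta>)"
proof -
  define w where "w l = (if l = j then 1 else - \<beta> $ delete_index j l)" for l
  have wins: "w (insert_index j i) = - \<beta> $ i" for i
    unfolding w_def using insert_index_exclude[of j i] del_ins by simp
  have pw: "(y \<omega> j - (\<integral>\<omega>'. y \<omega>' j \<partial>M))
               - (\<Sum>i<p - 1. (y \<omega> (insert_index j i) - (\<integral>\<omega>'. y \<omega>' (insert_index j i) \<partial>M)) * \<beta> $ i)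
      = (\<Sum>l<p. w l * ycen l \<omega>)" for \<omega>
  proof -
    have "(\<Sum>l<p. w l * ycen l \<omega>) = w j * ycen j \<omega> + (\<Sum>i<q. w (insert_index j i) * ycen (insert_index j i) \<omega>)"
      by (rule sum_split[OF j])
    also have "\<dots> = ycen j \<omega> - (\<Sum>i<q. ycen (insert_index j i) \<omega> * \<beta> $ i)"
      unfolding wins by (simp add: w_def sum_negf mult.commute)
    finally show ?thesis unfolding ycen_def by simp
  qed
  have "(\<integral>\<omega>. ((y \<omega> j - (\<integral>\<omega>'. y \<omega>' j \<partial>M))
               - (\<Sum>i<p - 1. (y \<omega> (insert_index j i) - (\<integral>\<omega>'. y \<omega>' (insert_index j i) \<partial>M)) * \<beta> $ i))\<^sup>2 \<partial>M)
     = (\<integral>\<omega>. (\<Sum>l<p. w l * ycen l \<omega>)\<^sup>2 \<partial>M)" unfolding pw ..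
  also have "\<dots> = (\<Sum>l<p. \<Sum>m<p. w l * w m * Sy $$ (l,m))" by (rule quad)
  also have "\<dots> = vec p w \<bullet> (Sy *\<^sub>v vec p w)" by (rule quad_vec[OF Sy, symmetric])
  also have "vec p w = wb \<beta>" unfolding wb_def w_def ..
  finally show ?thesis .
qed

lemma J_decomp:
  fixes \<beta> :: "real vec"
  defines "d \<equiv> wb \<beta> - wb al"
  shows "wb \<beta> \<bullet> (Sy *\<^sub>v wb \<beta>) = wb al \<bullet> (Sy *\<^sub>v wb al) + d \<bullet> (Sy *\<^sub>v d)"
proof -
  define x where "x = wb al"
  define e where "e = vec p (\<lambda>m. if m = j then t2 else (0::real))"
  have x: "x \<in> carrier_vec p" unfolding x_def by (rule wb)
  have dc: "d \<in> carrier_vec p" unfolding d_def using wb by auto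
  have e: "e \<in> carrier_vec p" unfolding e_def by simp
  have Sx: "Sy *\<^sub>v x = e" unfolding x_def wb_al e_def by (rule Sy_wv)
  have wbx: "wb \<beta> = x + d" unfolding d_def x_def using wb[of \<beta>] wb[of al] by auto
  have dj: "d $ j = 0" unfolding d_def using j wb[of \<beta>] wb[of al] by (simp add: wb_def)
  have de: "d \<bullet> e = 0"
  proof -
    have "d \<bullet> e = (\<Sum>m\<in>{0..<p}. d $ m * e $ m)" unfolding scalar_prod_def using e by simp
    also have "\<dots> = (\<Sum>m\<in>{0..<p}. if m = j then d $ j * t2 else 0)"
      by (rule sum.cong[OF refl]) (simp add: e_def)
    also have "\<dots> = 0" using j dj by simp
    finally show ?thesis .
  qed
  have xSd: "x \<bullet> (Sy *\<^sub>v d) = d \<bullet> e"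
  proof -
    have "(Sy\<^sup>T *\<^sub>v x) \<bullet> d = x \<bullet> (Sy *\<^sub>v d)" by (rule transpose_vec_mult_scalar[OF Sy dc x])
    hence "x \<bullet> (Sy *\<^sub>v d) = e \<bullet> d" unfolding SyT Sx by simp
    thus ?thesis using comm_scalar_prod[OF e dc] by simp
  qed
  have "wb \<beta> \<bullet> (Sy *\<^sub>v wb \<beta>) = (x + d) \<bullet> (Sy *\<^sub>v x + Sy *\<^sub>v d)"
    unfolding wbx by (subst mult_add_distrib_mat_vec[OF Sy x dc]) rule
  also have "\<dots> = x \<bullet> (Sy *\<^sub>v x) + x \<bullet> (Sy *\<^sub>v d) + (d \<bullet> (Sy *\<^sub>v x) + d \<bullet> (Sy *\<^sub>v d))"
    using x dc Sy by (simp add: add_scalar_prod_distrib[of _ p] scalar_prod_add_distrib[of _ p])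
  also have "\<dots> = x \<bullet> (Sy *\<^sub>v x) + d \<bullet> (Sy *\<^sub>v d)" unfolding xSd Sx de by simp
  finally show ?thesis unfolding x_def .
qed

lemma wb_inj: assumes b: "\<beta> \<in> carrier_vec q" and eq: "wb \<beta> - wb al = 0\<^sub>v p" shows "\<beta> = al"
proof (rule eq_vecI)
  fix i assume "i < dim_vec al"
  hence i: "i < q" using al by simp
  have "(wb \<beta> - wb al) $ insert_index j i = 0" using eq ins_lt[OF j i] by simp
  hence "- \<beta> $ i + al $ i = 0" using ins_lt[OF j i] insert_index_exclude[of j i] wb[of \<beta>] wb[of al]
    by (simp add: wb_def del_ins)
  thus "\<beta> $ i = al $ i" by simp
qed (use b al in simp)

lemma alpha_star_eq: "alpha_star M y p j = al"
  unfolding alpha_star_def J_eq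
proof (rule the_equality)
  show "al \<in> carrier_vec q \<and> (\<forall>\<beta>\<in>carrier_vec q. wb al \<bullet> (Sy *\<^sub>v wb al) \<le> wb \<beta> \<bullet> (Sy *\<^sub>v wb \<beta>))"
  proof (intro conjI ballI al)
    fix \<beta> :: "real vec"
    have "(wb \<beta> - wb al) \<bullet> (Sy *\<^sub>v (wb \<beta> - wb al)) \<ge> 0" by (rule Sy_psd) (use wb in auto)
    thus "wb al \<bullet> (Sy *\<^sub>v wb al) \<le> wb \<beta> \<bullet> (Sy *\<^sub>v wb \<beta>)" unfolding J_decomp[of \<beta>] by simp
  qed
next
  fix g assume g: "g \<in> carrier_vec q \<and> (\<forall>\<beta>\<in>carrier_vec q. wb g \<bullet> (Sy *\<^sub>v wb g) \<le> wb \<beta> \<bullet> (Sy *\<^sub>v wb \<beta>))"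
  hence "wb g \<bullet> (Sy *\<^sub>v wb g) \<le> wb al \<bullet> (Sy *\<^sub>v wb al)" using al by blast
  hence le: "(wb g - wb al) \<bullet> (Sy *\<^sub>v (wb g - wb al)) \<le> 0" unfolding J_decomp[of g] by simp
  have "wb g - wb al = 0\<^sub>v p"
  proof (rule ccontr)
    assume "wb g - wb al \<noteq> 0\<^sub>v p"
    from Sy_pd[OF _ this] le show False using wb by auto
  qed
  thus "g = al" using wb_inj g by blast
qed

lemma Th_diag: "Th $$ (j,j) = 1 / t2"
proof -
  have "t2 * Th $$ (j,j) = 1" using Th_row[OF j] by (simp add: wv_def)
  thus ?thesis using t2_nz by (simp add: field_simps)
qed

lemma Th_off: assumes n: "n < p" "n \<noteq> j"
  shows "Th $$ (j,n) = - (alpha_star M y p j $ delete_index j n) / t2"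
proof -
  have "t2 * Th $$ (j,n) = - (al $ delete_index j n)" using Th_row[OF n(1)] n by (simp add: wv_def)
  thus ?thesis using t2_nz unfolding alpha_star_eq by (simp add: field_simps)
qed

lemma Th_ins: assumes i: "i < q"
  shows "Th $$ (j, insert_index j i) = - (alpha_star M y p j $ i) / t2"
  using Th_off[OF ins_lt[OF j i] insert_index_exclude] by (simp add: del_ins)

end

theorem lemma1:
  fixes M :: "'a measure" and f u y :: "'a \<Rightarrow> nat \<Rightarrow> real"
    and A :: "real mat" and p K :: nat and c C :: real
  assumes prob: "prob_space M"
    and A_dim: "A \<in> carrier_mat K p"
    (* model y = A' f + u, one draw t (iid over t) *)
    and model: "\<And>\<omega> i. i < p \<Longrightarrow> y \<omega> i = (\<Sum>k<K. f \<omega> k * A $$ (k, i)) + u \<omega> i"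
    and f_meas: "\<And>k. k < K \<Longrightarrow> (\<lambda>\<omega>. f \<omega> k) \<in> borel_measurable M"
    and u_meas: "\<And>i. i < p \<Longrightarrow> (\<lambda>\<omega>. u \<omega> i) \<in> borel_measurable M"
    and f_L2: "\<And>k. k < K \<Longrightarrow> integrable M (\<lambda>\<omega>. (f \<omega> k)\<^sup>2)"
    and u_L2: "\<And>i. i < p \<Longrightarrow> integrable M (\<lambda>\<omega>. (u \<omega> i)\<^sup>2)"
    and u_mean: "\<And>i. i < p \<Longrightarrow> (\<integral>\<omega>. u \<omega> i \<partial>M) = 0"
    (* Assumption 1: f_t, u_jt, U_{-jt} mutually independent, for each j *)
    and indep: "\<And>j. j < p \<Longrightarrow> prob_space.indep_vars M
        (\<lambda>g. PiM (case g of 0 \<Rightarrow> {..<K} | Suc 0 \<Rightarrow> {j} | _ \<Rightarrow> {..<p} - {j}) (\<lambda>_. borel))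
        (\<lambda>g \<omega>. case g of 0 \<Rightarrow> restrict (f \<omega>) {..<K}
                      | Suc 0 \<Rightarrow> restrict (u \<omega>) {j}
                      | _ \<Rightarrow> restrict (u \<omega>) ({..<p} - {j}))
        {0, 1, 2::nat}"
    (* Assumption 2(i) *)
    and c_pos: "0 < c"
    and SU_eig: "\<And>j ev. j < p \<Longrightarrow> eigenvalue (Sigma_U_minus M u p j) ev \<Longrightarrow> ev \<ge> c"
    and sigma_up: "\<And>j. j < p \<Longrightarrow> sigma2 M u j \<le> C"
    and sigma_low: "\<And>j. j < p \<Longrightarrow> sigma2 M u j \<ge> c"
    (* Assumption 3 (non-asymptotic parts) *)
    and p_K: "p > K + 1"
    and A_rank: "\<And>j. j < p \<Longrightarrow> vec_space.rank (p - 1) (A_minus A p j) = K"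
    and Sf_rank: "vec_space.rank K (cov_mat M f K) = K"
    and Sf_eig: "\<And>ev. eigenvalue (cov_mat M f K) ev \<Longrightarrow> ev \<le> C"
  shows "invertible_mat (cov_mat M y p) \<and>
    (\<forall>j < p.
       mat_inv (cov_mat M y p) $$ (j, j) = 1 / tau2 M f u A p j
     \<and> alpha_star M y p j = alpha_formula M f u A p j
     \<and> (\<forall>i < p - 1. mat_inv (cov_mat M y p) $$ (j, insert_index j i)
                      = - (alpha_star M y p j $ i) / tau2 M f u A p j))
    \<and> mat_inv (cov_mat M y p) = mat p p (\<lambda>(j, l).
         if l = j then 1 / tau2 M f u A p j
         else - (alpha_star M y p j $ delete_index j l) / tau2 M f u A p j)"
proof -
  have FM: "fmod M f u y A p K c"
    unfolding fmod_def fmod_axioms_def using assms by auto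
  have fj: "fmodj M f u y A p K c j" if "j < p" for j
    unfolding fmodj_def fmodj_axioms_def using FM that by auto
  have p0: "0 < p" using p_K by simp
  have inv: "invertible_mat (cov_mat M y p)" using fmodj.Th(4)[OF fj[OF p0]] .
  have part2: "\<forall>j < p.
       mat_inv (cov_mat M y p) $$ (j, j) = 1 / tau2 M f u A p j
     \<and> alpha_star M y p j = alpha_formula M f u A p j
     \<and> (\<forall>i < p - 1. mat_inv (cov_mat M y p) $$ (j, insert_index j i)
                      = - (alpha_star M y p j $ i) / tau2 M f u A p j)"
    using fmodj.Th_diag[OF fj] fmodj.alpha_star_eq[OF fj] fmodj.Th_ins[OF fj] by blast
  have part3: "mat_inv (cov_mat M y p) = mat p p (\<lambda>(j, l).
         if l = j then 1 / tau2 M f u A p j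
         else - (alpha_star M y p j $ delete_index j l) / tau2 M f u A p j)"
  proof (rule eq_matI)
    fix j l assume "j < dim_row (mat p p (\<lambda>(j, l).
         if l = j then 1 / tau2 M f u A p j
         else - (alpha_star M y p j $ delete_index j l) / tau2 M f u A p j))"
      "l < dim_col (mat p p (\<lambda>(j, l).
         if l = j then 1 / tau2 M f u A p j
         else - (alpha_star M y p j $ delete_index j l) / tau2 M f u A p j))"
    hence jl: "j < p" "l < p" by auto
    show "mat_inv (cov_mat M y p) $$ (j, l) = mat p p (\<lambda>(j, l).
         if l = j then 1 / tau2 M f u A p j
         else - (alpha_star M y p j $ delete_index j l) / tau2 M f u A p j) $$ (j, l)"
    proof (cases "l = j")
      case True thus ?thesis using jl fmodj.Th_diag[OF fj[OF jl(1)]] by simp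
    next
      case False thus ?thesis using jl fmodj.Th_off[OF fj[OF jl(1)] jl(2) False] by simp
    qed
  qed (use fmodj.Th(1)[OF fj[OF p0]] in auto)
  show ?thesis using inv part2 part3 by blast
qed

end
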